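(* Define, for $\boldsymbol{\alpha}\in\mathbb{R}^T_{++}$, $$Z_C(\boldsymbol{\alpha})=\Big\{\boldsymbol{x}\in\mathbb{R}^n:\sup_{\mathbb{P}\in\mathcal{P}_W}\inf_{\beta\in\mathbb{R}}\Big\{\beta+\frac1\epsilon\mathbb{E}_{\mathbb{P}}\Big[\Big(\max_{t\in[T]}\{-\alpha_t f_t(\boldsymbol{x},\boldsymbol{\xi})\}-\beta\Big)_+\Big]\Big\}\le0\Big\},$$ and $Z_C=\bigcup_{\boldsymbol{\alpha}\in\mathbb{R}^T_{++}}Z_C(\boldsymbol{\alpha})$. Then $Z_C=Z_{C_1}\cup Z_{C_2}$, where $Z_{C_1}=\{\boldsymbol{x}\in\mathbb{R}^n: f_t(\boldsymbol{x},\boldsymbol{\xi})\ge0\ \forall\boldsymbol{\xi}\in\Xi,\ \forall t\in[T]\}$ and $Z_{C_2}$ is the set of all $\boldsymbol{x}\in\mathbb{R}^n$ for which there exist $\lambda\ge0$, $\alpha_t\ge0$ ($t\in[T]$), $s_i\ge0$ ($i\in[N]$) and $\boldsymbol{z}_{it}\in\mathbb{R}^m$ such that $$\lambda\delta+\frac1N\sum_{i=1}^Ns_i\le\epsilon,$$ $$G_{f_t}(\boldsymbol{z}_{it},\alpha_t,\boldsymbol{x})+1-\boldsymbol{z}_{it}^{\top}\boldsymbol{\zeta}^i-s_i\le0\quad\forall i\in[N],\forall t\in[T],$$ $$\|\boldsymbol{z}_{it}\|_*-\lambda\le0\quad\forall i\in[N],\forall t\in[T],$$ with $G_{f_t}(\boldsymbol{z},\alpha,\boldsymbol{x})=\sup_{\boldsymbol{\xi}\in\Xi}[\boldsymbol{z}^{\top}\boldsymbol{\xi}-\alpha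 f_t(\boldsymbol{x},\boldsymbol{\xi})]$.
   Context: Setting: $\boldsymbol{x}\in\mathbb{R}^n$, $\boldsymbol{\xi}\in\mathbb{R}^m$ supported on $\Xi\subseteq\mathbb{R}^m$, $[T]=\{1,\dots,T\}$, $\epsilon\in(0,1)$, $(a)_+=\max\{a,0\}$, $\mathbb{R}^T_{++}$ the vectors with all entries positive. Assumptions: (A1) each $f_t$ is convex continuous in $\boldsymbol{\xi}$ for fixed $\boldsymbol{x}$ and concave continuous in $\boldsymbol{x}$ for fixed $\boldsymbol{\xi}$; (A2) $\Xi$ is nonempty, closed and convex. $\|\cdot\|$ is a norm on $\mathbb{R}^m$ with dual norm $\|\cdot\|_*$. Given samples $\boldsymbol{\zeta}^1,\dots,\boldsymbol{\zeta}^N\in\Xi$ with empirical distribution $\mathbb{P}_{\tilde\zeta}$ and radius $\delta>0$, $\mathcal{P}_W=\{\mathbb{P}:\mathbb{P}\{\boldsymbol{\xi}\in\Xi\}=1,\ W(\mathbb{P},\mathbb{P}_{\tilde\zeta})\le\delta\}$ where $W$ is the 1-Wasserstein distance with transport cost $\|\boldsymbol{\xi}_1-\boldsymbol{\xi}_2\|$. *)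

theory Defs
  imports "HOL-Probability.Probability"
begin

definition is_norm :: "(real ^ 'm \<Rightarrow> real) \<Rightarrow> bool" where
  "is_norm nrm \<longleftrightarrow> (\<forall>x. 0 \<le> nrm x) \<and> (\<forall>x. nrm x = 0 \<longleftrightarrow> x = 0)
     \<and> (\<forall>c x. nrm (c *\<^sub>R x) = \<bar>c\<bar> * nrm x) \<and> (\<forall>x y. nrm (x + y) \<le> nrm x + nrm y)"

definition dual_norm :: "(real ^ 'm \<Rightarrow> real) \<Rightarrow> real ^ 'm \<Rightarrow> real" where
  "dual_norm nrm z = (SUP \<xi>\<in>{\<xi>. nrm \<xi> \<le> 1}. z \<bullet> \<xi>)"

definition couplings :: "(real ^ 'm) measure \<Rightarrow> (real ^ 'm) measure \<Rightarrow> ((real ^ 'm) \<times> (real ^ 'm)) measure set" where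
  "couplings P Q = {\<pi>. prob_space \<pi> \<and> sets \<pi> = sets (borel \<Otimes>\<^sub>M borel)
      \<and> distr \<pi> borel fst = P \<and> distr \<pi> borel snd = Q}"

definition wasserstein1 :: "(real ^ 'm \<Rightarrow> real) \<Rightarrow> (real ^ 'm) measure \<Rightarrow> (real ^ 'm) measure \<Rightarrow> ennreal" where
  "wasserstein1 nrm P Q = (INF \<pi>\<in>couplings P Q. \<integral>\<^sup>+ p. ennreal (nrm (fst p - snd p)) \<partial>\<pi>)"

definition emp_dist :: "nat \<Rightarrow> (nat \<Rightarrow> real ^ 'm) \<Rightarrow> (real ^ 'm) measure" where
  "emp_dist N \<zeta> = distr (measure_pmf (pmf_of_set {1..N})) borel \<zeta>"

definition ambiguity_set :: "(real ^ 'm \<Rightarrow> real) \<Rightarrow> (real ^ 'm) set \<Rightarrow> nat \<Rightarrow> (nat \<Rightarrow> real ^ 'm) \<Rightarrow> real \<Rightarrow> (real ^ 'm) measure set" where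
  "ambiguity_set nrm \<Xi> N \<zeta> \<delta> = {P. prob_space P \<and> sets P = sets borel \<and> emeasure P \<Xi> = 1
      \<and> wasserstein1 nrm P (emp_dist N \<zeta>) \<le> ennreal \<delta>}"

definition ZC_alpha :: "(nat \<Rightarrow> real ^ 'n \<Rightarrow> real ^ 'm \<Rightarrow> real) \<Rightarrow> nat \<Rightarrow> real \<Rightarrow> (real ^ 'm) measure set
     \<Rightarrow> (nat \<Rightarrow> real) \<Rightarrow> (real ^ 'n) set" where
  "ZC_alpha f T \<epsilon> PW \<alpha> = {x. (SUP P\<in>PW. INF \<beta>::real. ereal \<beta> + ereal (1 / \<epsilon>) *
        enn2ereal (\<integral>\<^sup>+ \<xi>. ennreal (max (Max ((\<lambda>t. - \<alpha> t * f t x \<xi>) ` {1..T}) - \<beta>) 0) \<partial>P)) \<le> 0}"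

definition ZC :: "(nat \<Rightarrow> real ^ 'n \<Rightarrow> real ^ 'm \<Rightarrow> real) \<Rightarrow> nat \<Rightarrow> real \<Rightarrow> (real ^ 'm) measure set \<Rightarrow> (real ^ 'n) set" where
  "ZC f T \<epsilon> PW = (\<Union>\<alpha>\<in>{\<alpha>. \<forall>t\<in>{1..T}. \<alpha> t > 0}. ZC_alpha f T \<epsilon> PW \<alpha>)"

definition ZC1 :: "(nat \<Rightarrow> real ^ 'n \<Rightarrow> real ^ 'm \<Rightarrow> real) \<Rightarrow> nat \<Rightarrow> (real ^ 'm) set \<Rightarrow> (real ^ 'n) set" where
  "ZC1 f T \<Xi> = {x. \<forall>\<xi>\<in>\<Xi>. \<forall>t\<in>{1..T}. f t x \<xi> \<ge> 0}"

definition G_fun :: "(nat \<Rightarrow> real ^ 'n \<Rightarrow> real ^ 'm \<Rightarrow> real) \<Rightarrow> (real ^ 'm) set \<Rightarrow> nat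
     \<Rightarrow> real ^ 'm \<Rightarrow> real \<Rightarrow> real ^ 'n \<Rightarrow> ereal" where
  "G_fun f \<Xi> t z a x = (SUP \<xi>\<in>\<Xi>. ereal (z \<bullet> \<xi> - a * f t x \<xi>))"

definition ZC2 :: "(nat \<Rightarrow> real ^ 'n \<Rightarrow> real ^ 'm \<Rightarrow> real) \<Rightarrow> nat \<Rightarrow> (real ^ 'm) set \<Rightarrow> (real ^ 'm \<Rightarrow> real)
     \<Rightarrow> nat \<Rightarrow> (nat \<Rightarrow> real ^ 'm) \<Rightarrow> real \<Rightarrow> real \<Rightarrow> (real ^ 'n) set" where
  "ZC2 f T \<Xi> nrm N \<zeta> \<delta> \<epsilon> = {x. \<exists>(lam::real) (\<alpha>::nat \<Rightarrow> real) (s::nat \<Rightarrow> real) (z::nat \<Rightarrow> nat \<Rightarrow> real ^ 'm).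
      lam \<ge> 0 \<and> (\<forall>t\<in>{1..T}. \<alpha> t \<ge> 0) \<and> (\<forall>i\<in>{1..N}. s i \<ge> 0)
      \<and> lam * \<delta> + (1 / real N) * (\<Sum>i=1..N. s i) \<le> \<epsilon>
      \<and> (\<forall>i\<in>{1..N}. \<forall>t\<in>{1..T}. G_fun f \<Xi> t (z i t) (\<alpha> t) x + ereal (1 - z i t \<bullet> \<zeta> i - s i) \<le> 0)
      \<and> (\<forall>i\<in>{1..N}. \<forall>t\<in>{1..T}. dual_norm nrm (z i t) - lam \<le> 0)}"

end

theory Submission
  imports Defs
begin

lemma nrm_props:
  assumes "is_norm nrm"
  shows "nrm 0 = 0" "\<And>v. nrm (- v) = nrm v" "\<And>v. 0 \<le> nrm v"
    "\<And>c v. nrm (c *\<^sub>R v) = \<bar>c\<bar> * nrm v" "\<And>x y. nrm (x + y) \<le> nrm x + nrm y"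
    "\<And>v. nrm v = 0 \<longleftrightarrow> v = 0"
proof -
  show "nrm 0 = 0" using assms unfolding is_norm_def by auto
  show "\<And>v. nrm (- v) = nrm v"
  proof -
    fix v
    have "nrm ((-1) *\<^sub>R v) = \<bar>-1\<bar> * nrm v" using assms unfolding is_norm_def by blast
    then show "nrm (- v) = nrm v" by simp
  qed
qed (use assms in \<open>auto simp: is_norm_def\<close>)

lemma nrm_convex:
  assumes "is_norm nrm"
  shows "convex_on UNIV nrm"
proof (rule convex_onI)
  fix t :: real and x y :: "real ^ 'a" assume t: "0 < t" "t < 1"
  have "nrm ((1 - t) *\<^sub>R x + t *\<^sub>R y) \<le> nrm ((1 - t) *\<^sub>R x) + nrm (t *\<^sub>R y)"
    using nrm_props[OF assms] by blast
  also have "\<dots> = (1 - t) * nrm x + t * nrm y" using nrm_props(4)[OF assms] t by simp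
  finally show "nrm ((1 - t) *\<^sub>R x + t *\<^sub>R y) \<le> (1 - t) * nrm x + t * nrm y" .
qed (simp)

lemma nrm_lower:
  assumes "is_norm nrm"
  shows "\<exists>\<mu>>0. \<forall>v::real^'a. \<mu> * norm v \<le> nrm v"
proof -
  have cont: "continuous_on UNIV nrm"
    by (rule convex_on_continuous[OF open_UNIV nrm_convex[OF assms]])
  have ne: "sphere (0::real^'a) 1 \<noteq> {}" by simp
  obtain x0 where x0: "x0 \<in> sphere (0::real^'a) 1" "\<forall>y\<in>sphere 0 1. nrm x0 \<le> nrm y"
    using continuous_attains_inf[OF compact_sphere ne continuous_on_subset[OF cont]] by blast
  have "x0 \<noteq> 0" using x0 by auto
  then have pos: "nrm x0 > 0" using nrm_props[OF assms] by (metis less_eq_real_def)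
  show ?thesis
  proof (intro exI[of _ "nrm x0"] conjI pos allI)
    fix v :: "real^'a"
    show "nrm x0 * norm v \<le> nrm v"
    proof (cases "v = 0")
      case True then show ?thesis using nrm_props[OF assms] by simp
    next
      case False
      have "(1 / norm v) *\<^sub>R v \<in> sphere 0 1" using False by simp
      then have "nrm x0 \<le> nrm ((1 / norm v) *\<^sub>R v)" using x0 by blast
      also have "\<dots> = nrm v / norm v" using nrm_props(4)[OF assms] by simp
      finally show ?thesis using False by (simp add: field_simps)
    qed
  qed
qed

lemma dual_norm_ineq:
  assumes "is_norm nrm"
  shows "z \<bullet> v \<le> dual_norm nrm z * nrm v"
proof -
  obtain \<mu> where mu: "\<mu> > 0" "\<forall>v::real^'a. \<mu> * norm v \<le> nrm v" using nrm_lower[OF assms] by blast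
  have bdd: "bdd_above ((\<lambda>\<xi>. z \<bullet> \<xi>) ` {\<xi>. nrm \<xi> \<le> 1})"
  proof (rule bdd_aboveI2)
    fix \<xi> assume "\<xi> \<in> {\<xi>. nrm \<xi> \<le> 1}"
    then have "\<mu> * norm \<xi> \<le> 1" using mu by (meson mem_Collect_eq order_trans)
    then have "norm \<xi> \<le> 1 / \<mu>" using mu by (simp add: field_simps)
    have "z \<bullet> \<xi> \<le> norm z * norm \<xi>" by (metis Cauchy_Schwarz_ineq2 abs_le_D1)
    also have "\<dots> \<le> norm z * (1 / \<mu>)" using \<open>norm \<xi> \<le> 1 / \<mu>\<close> by (intro mult_left_mono) auto
    finally show "z \<bullet> \<xi> \<le> norm z * (1 / \<mu>)" .
  qed
  show ?thesis
  proof (cases "v = 0")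
    case True then show ?thesis using nrm_props(1)[OF assms] by simp
  next
    case False
    then have np: "nrm v > 0" using nrm_props[OF assms] by (metis less_eq_real_def)
    let ?u = "(1 / nrm v) *\<^sub>R v"
    have "nrm ?u = 1" using np nrm_props(4)[OF assms] by simp
    then have "z \<bullet> ?u \<le> dual_norm nrm z" unfolding dual_norm_def
      by (intro cSUP_upper[OF _ bdd]) simp
    then have "(z \<bullet> v) / nrm v \<le> dual_norm nrm z" by simp
    then show ?thesis using np by (simp add: field_simps)
  qed
qed

lemma dual_norm_le:
  assumes "is_norm nrm" "\<And>v. w \<bullet> v \<le> lam * nrm v" "lam \<ge> 0"
  shows "dual_norm nrm w \<le> lam"
  unfolding dual_norm_def
proof (rule cSUP_least)
  show "{\<xi>. nrm \<xi> \<le> 1} \<noteq> {}" using nrm_props(1)[OF assms(1)] by (auto intro!: exI[of _ 0])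
  fix \<xi> assume "\<xi> \<in> {\<xi>. nrm \<xi> \<le> 1}"
  then show "w \<bullet> \<xi> \<le> lam" using assms(2)[of \<xi>] assms(3)
    by (smt (verit) mem_Collect_eq mult_left_le)
qed

lemma hb_sandwich:
  fixes F :: "real^'a \<Rightarrow> real" and \<Xi> :: "(real^'a) set"
  assumes nrm: "is_norm nrm" and cvx: "convex \<Xi>" and z0: "\<zeta>0 \<in> \<Xi>"
    and conc: "\<And>x y u. x \<in> \<Xi> \<Longrightarrow> y \<in> \<Xi> \<Longrightarrow> 0 \<le> u \<Longrightarrow> u \<le> 1 \<Longrightarrow>
                 u * F x + (1 - u) * F y \<le> F (u *\<^sub>R x + (1 - u) *\<^sub>R y)"
    and lam: "lam \<ge> 0"
    and dom: "\<And>\<xi>. \<xi> \<in> \<Xi> \<Longrightarrow> F \<xi> \<le> lam * nrm (\<xi> - \<zeta>0)"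
  shows "\<exists>w. (\<forall>v. w \<bullet> v \<le> lam * nrm v) \<and> (\<forall>\<xi>\<in>\<Xi>. F \<xi> \<le> w \<bullet> (\<xi> - \<zeta>0))"
proof -
  note np = nrm_props[OF nrm]
  define A where "A = {(v, y). y > lam * nrm v}"
  define B where "B = {(\<xi> - \<zeta>0, y) | \<xi> y. \<xi> \<in> \<Xi> \<and> y \<le> F \<xi>}"
  have cA: "convex A"
  proof (rule convexI)
    fix p q :: "(real^'a) \<times> real" and u w :: real
    assume pq: "p \<in> A" "q \<in> A" and h: "0 \<le> u" "0 \<le> w" "u + w = 1"
    obtain a y1 where p: "p = (a, y1)" by (cases p)
    obtain b y2 where q: "q = (b, y2)" by (cases q)
    have h1: "lam * nrm a < y1" using pq(1) p unfolding A_def by simp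
    have h2: "lam * nrm b < y2" using pq(2) q unfolding A_def by simp
    have nn: "nrm (u *\<^sub>R a + w *\<^sub>R b) \<le> u * nrm a + w * nrm b"
      using np(5)[of "u *\<^sub>R a" "w *\<^sub>R b"] np(4)[of u a] np(4)[of w b] h(1,2) by simp
    have "lam * nrm (u *\<^sub>R a + w *\<^sub>R b) \<le> lam * (u * nrm a + w * nrm b)"
      using mult_left_mono[OF nn lam] .
    also have "\<dots> = u * (lam * nrm a) + w * (lam * nrm b)" by (simp add: algebra_simps)
    also have "\<dots> < u * y1 + w * y2"
    proof (cases "u = 0")
      case True then show ?thesis using h h2 by simp
    next
      case False then have "u > 0" using h by simp
      then have "u * (lam * nrm a) < u * y1" using h1 by simp
      moreover have "w * (lam * nrm b) \<le> w * y2" using h h2 by (intro mult_left_mono) auto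
      ultimately show ?thesis by simp
    qed
    finally show "u *\<^sub>R p + w *\<^sub>R q \<in> A" unfolding A_def p q by simp
  qed
  have cB: "convex B"
  proof (rule convexI)
    fix p q :: "(real^'a) \<times> real" and u w :: real
    assume pq: "p \<in> B" "q \<in> B" and h: "0 \<le> u" "0 \<le> w" "u + w = 1"
    from pq(1) obtain x1 y1 where p: "p = (x1 - \<zeta>0, y1)" "x1 \<in> \<Xi>" "y1 \<le> F x1"
      unfolding B_def by blast
    from pq(2) obtain x2 y2 where q: "q = (x2 - \<zeta>0, y2)" "x2 \<in> \<Xi>" "y2 \<le> F x2"
      unfolding B_def by blast
    have "u *\<^sub>R (x1 - \<zeta>0) + w *\<^sub>R (x2 - \<zeta>0) = (u *\<^sub>R x1 + w *\<^sub>R x2) - (u + w) *\<^sub>R \<zeta>0"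
      by (simp add: algebra_simps)
    then have e: "u *\<^sub>R (x1 - \<zeta>0) + w *\<^sub>R (x2 - \<zeta>0) = (u *\<^sub>R x1 + w *\<^sub>R x2) - \<zeta>0"
      using h(3) by simp
    have m: "u *\<^sub>R x1 + w *\<^sub>R x2 \<in> \<Xi>" using cvx h p(2) q(2) unfolding convex_def by blast
    have "u * y1 + w * y2 \<le> u * F x1 + w * F x2"
      using h p q by (intro add_mono mult_left_mono) auto
    also have "\<dots> \<le> F (u *\<^sub>R x1 + w *\<^sub>R x2)"
    proof -
      have w: "w = 1 - u" using h(3) by simp
      show ?thesis unfolding w using conc[of x1 x2 u] h p q by simp
    qed
    finally have le: "u * y1 + w * y2 \<le> F (u *\<^sub>R x1 + w *\<^sub>R x2)" .
    have "u *\<^sub>R p + w *\<^sub>R q = ((u *\<^sub>R x1 + w *\<^sub>R x2) - \<zeta>0, u * y1 + w * y2)"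
      using p(1) q(1) e by simp
    then show "u *\<^sub>R p + w *\<^sub>R q \<in> B" unfolding B_def using m le by blast
  qed
  have "(0, 1) \<in> A" unfolding A_def using np(1) by simp
  then have neA: "A \<noteq> {}" by blast
  have neB: "B \<noteq> {}" unfolding B_def using z0 by blast
  have disj: "B \<inter> A = {}"
  proof -
    { fix v y assume "(v, y) \<in> A" "(v, y) \<in> B"
      then obtain \<xi> where "\<xi> \<in> \<Xi>" "v = \<xi> - \<zeta>0" "y \<le> F \<xi>" "y > lam * nrm v"
        unfolding A_def B_def by auto
      then have False using dom[of \<xi>] by simp }
    then show ?thesis by auto
  qed
  obtain n b where nb: "n \<noteq> 0" "\<forall>x\<in>B. inner n x \<le> b" "\<forall>x\<in>A. inner n x \<ge> b"
    using separating_hyperplane_sets[OF cB cA neB neA disj] by blast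
  obtain w0 c0 where n: "n = (w0, c0)" by (cases n)
  have hA: "w0 \<bullet> v + c0 * y \<ge> b" if "y > lam * nrm v" for v y
    using nb(3) that unfolding A_def n by auto
  have hB: "w0 \<bullet> (\<xi> - \<zeta>0) + c0 * F \<xi> \<le> b" if "\<xi> \<in> \<Xi>" for \<xi>
    using nb(2) that unfolding B_def n by auto
  have c0: "c0 \<ge> 0"
  proof (rule ccontr)
    assume "\<not> c0 \<ge> 0"
    then have "c0 < 0" by simp
    have "w0 \<bullet> 0 + c0 * ((\<bar>b\<bar> + 1) / (- c0)) \<ge> b" proof (rule hA)
      have "(\<bar>b\<bar> + 1) / c0 < 0" using \<open>c0 < 0\<close> by (intro divide_pos_neg) auto
      then show "lam * nrm 0 < (\<bar>b\<bar> + 1) / (- c0)" using np(1) by simp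
    qed
    moreover have "c0 * ((\<bar>b\<bar> + 1) / (- c0)) = - (\<bar>b\<bar> + 1)" using \<open>c0 < 0\<close> by simp
    ultimately show False by simp
  qed
  have b0: "b \<le> 0"
  proof (rule ccontr)
    assume "\<not> b \<le> 0"
    then have "b > 0" by simp
    have "w0 \<bullet> 0 + c0 * (b / (2 * (c0 + 1))) \<ge> b" by (rule hA) (use \<open>b > 0\<close> c0 np(1) in simp)
    moreover have "c0 * (b / (2 * (c0 + 1))) < b"
    proof -
      have "c0 / (c0 + 1) < 1" using c0 by simp
      then have "c0 / (c0 + 1) * (b / 2) < 1 * (b / 2)" using \<open>b > 0\<close> c0
        by (intro mult_strict_right_mono) auto
      moreover have "c0 * (b / (2 * (c0 + 1))) = c0 / (c0 + 1) * (b / 2)" by simp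
      ultimately show ?thesis using \<open>b > 0\<close> by linarith
    qed
    ultimately show False by simp
  qed
  have c0pos: "c0 > 0"
  proof (rule ccontr)
    assume "\<not> c0 > 0"
    then have "c0 = 0" using c0 by simp
    then have w0: "w0 \<noteq> 0" using nb(1) n by (auto simp: zero_prod_def)
    define k where "k = (\<bar>b\<bar> + 1) / (w0 \<bullet> w0)"
    have kk: "w0 \<bullet> w0 > 0" using w0 by simp
    have "w0 \<bullet> (- k *\<^sub>R w0) + c0 * (lam * nrm (- k *\<^sub>R w0) + 1) \<ge> b" by (rule hA) simp
    then have "- k * (w0 \<bullet> w0) \<ge> b" using \<open>c0 = 0\<close> by simp
    moreover have "k * (w0 \<bullet> w0) = \<bar>b\<bar> + 1" unfolding k_def using kk by simp
    ultimately show False by simp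
  qed
  have key: "w0 \<bullet> v + c0 * (lam * nrm v) \<ge> 0" for v
  proof (rule ccontr)
    assume nk: "\<not> ?thesis"
    define d where "d = - (w0 \<bullet> v + c0 * (lam * nrm v))"
    have d: "d > 0" "w0 \<bullet> v + c0 * (lam * nrm v) = - d" using nk unfolding d_def by simp_all
    define k where "k = (c0 + \<bar>b\<bar> + 1) / d"
    have k: "k > 0" unfolding k_def using d c0 by simp
    have "w0 \<bullet> (k *\<^sub>R v) + c0 * (lam * nrm (k *\<^sub>R v) + 1) \<ge> b" by (rule hA) simp
    then have "k * (w0 \<bullet> v + c0 * (lam * nrm v)) + c0 \<ge> b"
      using k np(4)[of k v] by (simp add: algebra_simps)
    then have "- k * d + c0 \<ge> b" using d by simp
    moreover have "k * d = c0 + \<bar>b\<bar> + 1" unfolding k_def using d by simp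
    ultimately show False by simp
  qed
  show ?thesis
  proof (intro exI[of _ "- (1 / c0) *\<^sub>R w0"] conjI allI ballI)
    fix v
    have "- (w0 \<bullet> v) \<le> c0 * (lam * nrm v)" using key[of v] by simp
    then have "- (w0 \<bullet> v) / c0 \<le> lam * nrm v" using c0pos by (subst divide_le_eq) (simp add: mult.commute)
    then show "(- (1 / c0) *\<^sub>R w0) \<bullet> v \<le> lam * nrm v" by simp
  next
    fix \<xi> assume "\<xi> \<in> \<Xi>"
    have "c0 * F \<xi> \<le> - (w0 \<bullet> (\<xi> - \<zeta>0))" using hB[OF \<open>\<xi> \<in> \<Xi>\<close>] b0 by simp
    then have "F \<xi> \<le> - (w0 \<bullet> (\<xi> - \<zeta>0)) / c0" using c0pos by (subst le_divide_eq) (simp add: mult.commute)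
    then show "F \<xi> \<le> (- (1 / c0) *\<^sub>R w0) \<bullet> (\<xi> - \<zeta>0)" by simp
  qed
qed


definition is_plan :: "nat \<Rightarrow> (real^'m) set \<Rightarrow> (nat \<times> (real^'m) \<times> real) pmf \<Rightarrow> bool" where
  "is_plan N \<Xi> q \<longleftrightarrow> finite (set_pmf q) \<and> map_pmf fst q = pmf_of_set {1..N}
     \<and> (\<forall>a\<in>set_pmf q. fst (snd a) \<in> \<Xi> \<and> 0 \<le> snd (snd a) \<and> snd (snd a) \<le> 1)"

definition mix :: "real \<Rightarrow> 'a pmf \<Rightarrow> 'a pmf \<Rightarrow> 'a pmf" where
  "mix \<theta> q1 q2 = bind_pmf (bernoulli_pmf \<theta>) (\<lambda>b. if b then q1 else q2)"

lemma pmf_mix: "0 \<le> \<theta> \<Longrightarrow> \<theta> \<le> 1 \<Longrightarrow> pmf (mix \<theta> q1 q2) a = \<theta> * pmf q1 a + (1 - \<theta>) * pmf q2 a"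
  unfolding mix_def pmf_bind by simp

lemma set_mix: "set_pmf (mix \<theta> q1 q2) \<subseteq> set_pmf q1 \<union> set_pmf q2"
  unfolding mix_def by (auto split: if_splits)

lemma integral_finite_sum:
  fixes h :: "'a \<Rightarrow> real"
  assumes "finite A" "set_pmf q \<subseteq> A"
  shows "(\<integral>a. h a \<partial>measure_pmf q) = (\<Sum>a\<in>A. pmf q a * h a)"
  using integral_measure_pmf[OF assms(1), of q h] assms(2) by auto

lemma integral_mix:
  fixes h :: "'a \<Rightarrow> real"
  assumes "0 \<le> \<theta>" "\<theta> \<le> 1" "finite (set_pmf q1)" "finite (set_pmf q2)"
  shows "(\<integral>a. h a \<partial>measure_pmf (mix \<theta> q1 q2)) = \<theta> * (\<integral>a. h a \<partial>measure_pmf q1) + (1 - \<theta>) * (\<integral>a. h a \<partial>measure_pmf q2)"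
proof -
  let ?A = "set_pmf q1 \<union> set_pmf q2"
  have fA: "finite ?A" using assms by simp
  have "(\<integral>a. h a \<partial>measure_pmf (mix \<theta> q1 q2)) = (\<Sum>a\<in>?A. pmf (mix \<theta> q1 q2) a * h a)"
    by (rule integral_finite_sum[OF fA set_mix])
  also have "\<dots> = (\<Sum>a\<in>?A. \<theta> * (pmf q1 a * h a) + (1 - \<theta>) * (pmf q2 a * h a))"
  proof (rule sum.cong[OF refl])
    fix a show "pmf (mix \<theta> q1 q2) a * h a = \<theta> * (pmf q1 a * h a) + (1 - \<theta>) * (pmf q2 a * h a)"
      unfolding pmf_mix[OF assms(1,2)] by (simp only: distrib_right mult.assoc)
  qed
  also have "\<dots> = \<theta> * (\<Sum>a\<in>?A. pmf q1 a * h a) + (1 - \<theta>) * (\<Sum>a\<in>?A. pmf q2 a * h a)"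
    by (simp only: sum.distrib sum_distrib_left)
  also have "\<dots> = \<theta> * (\<integral>a. h a \<partial>measure_pmf q1) + (1 - \<theta>) * (\<integral>a. h a \<partial>measure_pmf q2)"
    using integral_finite_sum[OF fA, of q1 h] integral_finite_sum[OF fA, of q2 h] by auto
  finally show ?thesis .
qed

lemma plan_mix:
  assumes "is_plan N \<Xi> q1" "is_plan N \<Xi> q2" "0 \<le> \<theta>" "\<theta> \<le> 1"
  shows "is_plan N \<Xi> (mix \<theta> q1 q2)"
proof -
  have f1: "finite (set_pmf q1)" and f2: "finite (set_pmf q2)"
    using assms(1,2) unfolding is_plan_def by simp_all
  have s: "set_pmf (mix \<theta> q1 q2) \<subseteq> set_pmf q1 \<union> set_pmf q2" by (rule set_mix)
  have fin: "finite (set_pmf (mix \<theta> q1 q2))" using finite_subset[OF s] f1 f2 by simp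
  have m1: "map_pmf fst q1 = pmf_of_set {1..N}" and m2: "map_pmf fst q2 = pmf_of_set {1..N}"
    using assms(1,2) unfolding is_plan_def by simp_all
  have "map_pmf fst (mix \<theta> q1 q2) = bind_pmf (bernoulli_pmf \<theta>) (\<lambda>b. map_pmf fst (if b then q1 else q2))"
    unfolding mix_def map_bind_pmf ..
  also have "\<dots> = bind_pmf (bernoulli_pmf \<theta>) (\<lambda>b. pmf_of_set {1..N})"
    by (rule bind_pmf_cong) (simp_all add: m1 m2)
  also have "\<dots> = pmf_of_set {1..N}" by simp
  finally have mp: "map_pmf fst (mix \<theta> q1 q2) = pmf_of_set {1..N}" .
  have sp: "\<forall>a\<in>set_pmf (mix \<theta> q1 q2). fst (snd a) \<in> \<Xi> \<and> 0 \<le> snd (snd a) \<and> snd (snd a) \<le> 1"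
  proof
    fix a assume "a \<in> set_pmf (mix \<theta> q1 q2)"
    then have "a \<in> set_pmf q1 \<or> a \<in> set_pmf q2" using s by auto
    then show "fst (snd a) \<in> \<Xi> \<and> 0 \<le> snd (snd a) \<and> snd (snd a) \<le> 1"
      using assms(1,2) unfolding is_plan_def by auto
  qed
  show ?thesis unfolding is_plan_def using fin mp sp by simp
qed

lemma plan_det:
  assumes "N \<ge> 1" "\<And>i. i \<in> {1..N} \<Longrightarrow> xs i \<in> \<Xi>" "\<And>i. i \<in> {1..N} \<Longrightarrow> 0 \<le> us i \<and> us i \<le> 1"
  shows "is_plan N \<Xi> (map_pmf (\<lambda>i. (i, xs i, us i)) (pmf_of_set {1..N}))"
proof -
  have ne: "{1..N} \<noteq> {}" using assms(1) by simp
  have "map_pmf fst (map_pmf (\<lambda>i. (i, xs i, us i)) (pmf_of_set {1..N})) = map_pmf (\<lambda>i. i) (pmf_of_set {1..N})"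
    unfolding map_pmf_comp by simp
  then have "map_pmf fst (map_pmf (\<lambda>i. (i, xs i, us i)) (pmf_of_set {1..N})) = pmf_of_set {1..N}"
    by (simp add: map_pmf_ident)
  moreover have "set_pmf (map_pmf (\<lambda>i. (i, xs i, us i)) (pmf_of_set {1..N})) = (\<lambda>i. (i, xs i, us i)) ` {1..N}"
    using ne by simp
  ultimately show ?thesis unfolding is_plan_def using assms by auto
qed

lemma integral_det:
  fixes h :: "nat \<times> (real^'m) \<times> real \<Rightarrow> real"
  assumes "N \<ge> 1"
  shows "(\<integral>a. h a \<partial>measure_pmf (map_pmf (\<lambda>i. (i, xs i, us i)) (pmf_of_set {1..N})))
      = (\<Sum>i\<in>{1..N}. h (i, xs i, us i)) / real N"
proof -
  have ne: "{1..N} \<noteq> {}" using assms(1) by simp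
  show ?thesis unfolding integral_map_pmf using integral_pmf_of_set[OF ne] by simp
qed

lemma nrm_meas:
  assumes "is_norm nrm"
  shows "nrm \<in> borel_measurable borel"
  by (rule borel_measurable_continuous_onI[OF convex_on_continuous[OF open_UNIV nrm_convex[OF assms]]])

lemma plan_measure:
  fixes q :: "(nat \<times> (real^('m::finite)) \<times> real) pmf" and Lf :: "real^'m \<Rightarrow> real"
  assumes nrm: "is_norm nrm" and N: "N \<ge> 1" and pl: "is_plan N \<Xi> q" and cl: "closed \<Xi>"
    and c: "(\<integral>a. nrm (fst (snd a) - \<zeta> (fst a)) \<partial>measure_pmf q) \<le> \<delta>"
  shows "distr (measure_pmf q) borel (\<lambda>a. fst (snd a)) \<in> ambiguity_set nrm \<Xi> N \<zeta> \<delta>"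
proof -
  let ?P = "distr (measure_pmf q) borel (\<lambda>a. fst (snd a))"
  let ?\<pi> = "distr (measure_pmf q) (borel \<Otimes>\<^sub>M borel) (\<lambda>a. (fst (snd a), \<zeta> (fst a)))"
  have fin: "finite (set_pmf q)" and mq: "map_pmf fst q = pmf_of_set {1..N}"
    and sup: "\<And>a. a \<in> set_pmf q \<Longrightarrow> fst (snd a) \<in> \<Xi>"
    using pl unfolding is_plan_def by auto
  have ps: "prob_space ?P"
    by (rule prob_space.prob_space_distr) (simp_all add: prob_space_measure_pmf)
  have sP: "sets ?P = sets borel" by simp
  have "emeasure ?P \<Xi> = emeasure (measure_pmf q) ((\<lambda>a. fst (snd a)) -` \<Xi> \<inter> space (measure_pmf q))"
    by (rule emeasure_distr) (simp_all add: borel_closed[OF cl])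
  also have "\<dots> = 1"
    by (rule measure_pmf.emeasure_eq_1_AE) (auto simp: AE_measure_pmf_iff sup)
  finally have eP: "emeasure ?P \<Xi> = 1" .
  have cp: "?\<pi> \<in> couplings ?P (emp_dist N \<zeta>)"
    unfolding couplings_def
  proof (intro CollectI conjI)
    show "prob_space ?\<pi>"
      by (rule prob_space.prob_space_distr) (simp_all add: prob_space_measure_pmf space_pair_measure)
    show "sets ?\<pi> = sets (borel \<Otimes>\<^sub>M borel)" by simp
    have "distr ?\<pi> borel fst = distr (measure_pmf q) borel (fst \<circ> (\<lambda>a. (fst (snd a), \<zeta> (fst a))))"
      by (rule distr_distr) (simp_all add: space_pair_measure)
    also have "\<dots> = ?P" by (simp add: comp_def)
    finally show "distr ?\<pi> borel fst = ?P" .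
    have "distr ?\<pi> borel snd = distr (measure_pmf q) borel (snd \<circ> (\<lambda>a. (fst (snd a), \<zeta> (fst a))))"
      by (rule distr_distr) (simp_all add: space_pair_measure)
    also have "\<dots> = distr (measure_pmf q) borel (\<zeta> \<circ> fst)" by (simp add: comp_def)
    also have "\<dots> = distr (distr (measure_pmf q) (count_space UNIV) fst) borel \<zeta>"
      by (rule distr_distr[symmetric]) simp_all
    also have "\<dots> = emp_dist N \<zeta>" unfolding emp_dist_def map_pmf_rep_eq[symmetric] mq ..
    finally show "distr ?\<pi> borel snd = emp_dist N \<zeta>" .
  qed
  have nm: "nrm \<in> borel_measurable borel" by (rule nrm_meas[OF nrm])
  have dm: "(\<lambda>p::(real^'m) \<times> (real^'m). fst p - snd p) \<in> borel_measurable (borel \<Otimes>\<^sub>M borel)"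
    by measurable
  have m2: "(\<lambda>p::(real^'m) \<times> (real^'m). ennreal (nrm (fst p - snd p))) \<in> borel_measurable (borel \<Otimes>\<^sub>M borel)"
    using measurable_compose[OF dm nm] by measurable
  have "(\<integral>\<^sup>+ p. ennreal (nrm (fst p - snd p)) \<partial>?\<pi>) = (\<integral>\<^sup>+ a. ennreal (nrm (fst (snd a) - \<zeta> (fst a))) \<partial>measure_pmf q)"
    apply (rule nn_integral_distr[where f="\<lambda>p. ennreal (nrm (fst p - snd p))" and T="\<lambda>a. (fst (snd a), \<zeta> (fst a))", simplified])
     apply (simp add: space_pair_measure)
    using m2 by simp
  also have "\<dots> = ennreal (\<integral>a. nrm (fst (snd a) - \<zeta> (fst a)) \<partial>measure_pmf q)"
    by (rule nn_integral_eq_integral) (simp_all add: integrable_measure_pmf_finite[OF fin] nrm_props[OF nrm])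
  also have "\<dots> \<le> ennreal \<delta>" using c by (rule ennreal_leI)
  finally have "(\<integral>\<^sup>+ p. ennreal (nrm (fst p - snd p)) \<partial>?\<pi>) \<le> ennreal \<delta>" .
  then have "wasserstein1 nrm ?P (emp_dist N \<zeta>) \<le> ennreal \<delta>"
    unfolding wasserstein1_def by (rule INF_lower2[OF cp])
  then show ?thesis unfolding ambiguity_set_def using ps sP eP by simp
qed

lemma plan_integral:
  fixes q :: "(nat \<times> (real^('m::finite)) \<times> real) pmf" and Lf :: "real^'m \<Rightarrow> real"
  assumes N: "N \<ge> 1" and pl: "is_plan N \<Xi> q" and Lm: "Lf \<in> borel_measurable borel" and eps: "\<epsilon> > 0"
  shows "ereal (\<beta> + ((\<integral>a. snd (snd a) * Lf (fst (snd a)) \<partial>measure_pmf q) - \<beta> * (\<integral>a. snd (snd a) \<partial>measure_pmf q)) / \<epsilon>)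
     \<le> ereal \<beta> + ereal (1 / \<epsilon>) * enn2ereal (\<integral>\<^sup>+ \<xi>. ennreal (max (Lf \<xi> - \<beta>) 0) \<partial>distr (measure_pmf q) borel (\<lambda>a. fst (snd a)))"
proof -
  have fin: "finite (set_pmf q)"
    and sup: "\<And>a. a \<in> set_pmf q \<Longrightarrow> 0 \<le> snd (snd a) \<and> snd (snd a) \<le> 1"
    using pl unfolding is_plan_def by auto
  let ?S = "set_pmf q"
  have Lm': "(\<lambda>\<xi>. ennreal (max (Lf \<xi> - \<beta>) 0)) \<in> borel_measurable borel" using Lm by measurable
  have "(\<integral>\<^sup>+ \<xi>. ennreal (max (Lf \<xi> - \<beta>) 0) \<partial>distr (measure_pmf q) borel (\<lambda>a. fst (snd a)))
      = (\<integral>\<^sup>+ a. (\<lambda>\<xi>. ennreal (max (Lf \<xi> - \<beta>) 0)) ((\<lambda>a. fst (snd a)) a) \<partial>measure_pmf q)"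
    apply (rule nn_integral_distr)
     apply simp
    using Lm' by simp
  also have "\<dots> = ennreal (\<integral>a. max (Lf (fst (snd a)) - \<beta>) 0 \<partial>measure_pmf q)"
    by (rule nn_integral_eq_integral) (simp_all add: integrable_measure_pmf_finite[OF fin])
  finally have e1: "(\<integral>\<^sup>+ \<xi>. ennreal (max (Lf \<xi> - \<beta>) 0) \<partial>distr (measure_pmf q) borel (\<lambda>a. fst (snd a)))
      = ennreal (\<integral>a. max (Lf (fst (snd a)) - \<beta>) 0 \<partial>measure_pmf q)" .
  define X where "X = (\<integral>a. max (Lf (fst (snd a)) - \<beta>) 0 \<partial>measure_pmf q)"
  have X: "X = (\<Sum>a\<in>?S. pmf q a * max (Lf (fst (snd a)) - \<beta>) 0)"
    unfolding X_def by (rule integral_finite_sum[OF fin]) simp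
  have X0: "X \<ge> 0" unfolding X by (intro sum_nonneg) simp
  have l: "(\<integral>a. snd (snd a) * Lf (fst (snd a)) \<partial>measure_pmf q) = (\<Sum>a\<in>?S. pmf q a * (snd (snd a) * Lf (fst (snd a))))"
    by (rule integral_finite_sum[OF fin]) simp
  have m: "(\<integral>a. snd (snd a) \<partial>measure_pmf q) = (\<Sum>a\<in>?S. pmf q a * snd (snd a))"
    by (rule integral_finite_sum[OF fin]) simp
  have "(\<integral>a. snd (snd a) * Lf (fst (snd a)) \<partial>measure_pmf q) - \<beta> * (\<integral>a. snd (snd a) \<partial>measure_pmf q)
       = (\<Sum>a\<in>?S. pmf q a * (snd (snd a) * (Lf (fst (snd a)) - \<beta>)))"
    unfolding l m by (simp add: sum_distrib_left sum_subtractf[symmetric] algebra_simps)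
  also have "\<dots> \<le> X" unfolding X
  proof (rule sum_mono)
    fix a assume a: "a \<in> ?S"
    have "snd (snd a) * (Lf (fst (snd a)) - \<beta>) \<le> max (Lf (fst (snd a)) - \<beta>) 0"
    proof (cases "Lf (fst (snd a)) - \<beta> \<ge> 0")
      case True then show ?thesis using sup[OF a] by (simp add: mult_left_le_one_le)
    next
      case False then show ?thesis using sup[OF a] by (simp add: mult_nonneg_nonpos)
    qed
    then show "pmf q a * (snd (snd a) * (Lf (fst (snd a)) - \<beta>)) \<le> pmf q a * max (Lf (fst (snd a)) - \<beta>) 0"
      by (intro mult_left_mono) simp_all
  qed
  finally have le: "(\<integral>a. snd (snd a) * Lf (fst (snd a)) \<partial>measure_pmf q) - \<beta> * (\<integral>a. snd (snd a) \<partial>measure_pmf q) \<le> X" .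
  have "ereal \<beta> + ereal (1 / \<epsilon>) * enn2ereal (ennreal X) = ereal (\<beta> + X / \<epsilon>)"
    using X0 by simp
  moreover have "\<beta> + ((\<integral>a. snd (snd a) * Lf (fst (snd a)) \<partial>measure_pmf q) - \<beta> * (\<integral>a. snd (snd a) \<partial>measure_pmf q)) / \<epsilon> \<le> \<beta> + X / \<epsilon>"
    using le eps by (simp add: divide_right_mono)
  ultimately show ?thesis unfolding e1 X_def[symmetric] by simp
qed

lemma hard_core:
  fixes Lf :: "real^'m \<Rightarrow> real" and \<zeta> :: "nat \<Rightarrow> real^'m"
  assumes nrm: "is_norm nrm" and N: "N \<ge> 1" and eps: "0 < \<epsilon>" "\<epsilon> < 1" and delta: "\<delta> > 0"
    and cl: "closed \<Xi>" and samples: "\<And>i. i \<in> {1..N} \<Longrightarrow> \<zeta> i \<in> \<Xi>"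
    and Lm: "Lf \<in> borel_measurable borel"
    and hyp: "\<And>P. P \<in> ambiguity_set nrm \<Xi> N \<zeta> \<delta> \<Longrightarrow>
       (INF \<beta>::real. ereal \<beta> + ereal (1 / \<epsilon>) * enn2ereal (\<integral>\<^sup>+ \<xi>. ennreal (max (Lf \<xi> - \<beta>) 0) \<partial>P)) \<le> 0"
    and xi0: "\<xi>0 \<in> \<Xi>" "Lf \<xi>0 > 0"
  shows "\<exists>p>0. \<exists>lam\<ge>0. \<forall>xs. (\<forall>i\<in>{1..N}. xs i \<in> \<Xi>) \<longrightarrow>
      (\<Sum>i\<in>{1..N}. max (Lf (xs i) + p) 0 - lam * nrm (xs i - \<zeta> i)) / real N \<le> p * \<epsilon> - lam * \<delta>"
proof -
  define mq where "mq q = (\<integral>a. snd (snd a) \<partial>measure_pmf q)" for q :: "(nat \<times> (real^'m) \<times> real) pmf"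
  define lq where "lq q = (\<integral>a. snd (snd a) * Lf (fst (snd a)) \<partial>measure_pmf q)" for q :: "(nat \<times> (real^'m) \<times> real) pmf"
  define cq where "cq q = (\<integral>a. nrm (fst (snd a) - \<zeta> (fst a)) \<partial>measure_pmf q)" for q :: "(nat \<times> (real^'m) \<times> real) pmf"
  define S where "S = (\<lambda>q. (mq q, lq q, cq q)) ` {q. is_plan N \<Xi> q}"
  define U where "U = {(\<epsilon>, l::real, c::real) | l c. l > 0 \<and> c < \<delta>}"
  define det where "det xs us = map_pmf (\<lambda>i. (i, xs i, us i)) (pmf_of_set {1..N})"
    for xs :: "nat \<Rightarrow> real^'m" and us :: "nat \<Rightarrow> real"
  have det_plan: "is_plan N \<Xi> (det xs us)" if "\<And>i. i \<in> {1..N} \<Longrightarrow> xs i \<in> \<Xi>"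
      "\<And>i. i \<in> {1..N} \<Longrightarrow> 0 \<le> us i \<and> us i \<le> 1" for xs us
    unfolding det_def by (rule plan_det[OF N that])
  have det_m: "mq (det xs us) = (\<Sum>i\<in>{1..N}. us i) / real N" for xs us
    unfolding mq_def det_def using integral_det[OF N, where h="\<lambda>a. snd (snd a)" and xs=xs and us=us] by simp
  have det_l: "lq (det xs us) = (\<Sum>i\<in>{1..N}. us i * Lf (xs i)) / real N" for xs us
    unfolding lq_def det_def using integral_det[OF N, where h="\<lambda>a. snd (snd a) * Lf (fst (snd a))" and xs=xs and us=us] by simp
  have det_c: "cq (det xs us) = (\<Sum>i\<in>{1..N}. nrm (xs i - \<zeta> i)) / real N" for xs us
    unfolding cq_def det_def using integral_det[OF N, where h="\<lambda>a. nrm (fst (snd a) - \<zeta> (fst a))" and xs=xs and us=us] by simp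
  have fin_plan: "finite (set_pmf q)" if "is_plan N \<Xi> q" for q
    using that unfolding is_plan_def by simp
  have cS: "convex S"
  proof (rule convexI)
    fix x y :: "real \<times> real \<times> real" and u v :: real
    assume xy: "x \<in> S" "y \<in> S" and uv: "0 \<le> u" "0 \<le> v" "u + v = 1"
    from xy obtain q1 q2 where q: "is_plan N \<Xi> q1" "is_plan N \<Xi> q2"
      "x = (mq q1, lq q1, cq q1)" "y = (mq q2, lq q2, cq q2)" unfolding S_def by blast
    have v: "v = 1 - u" using uv by simp
    have u1: "u \<le> 1" using uv by simp
    have pm: "is_plan N \<Xi> (mix u q1 q2)" by (rule plan_mix[OF q(1,2) uv(1) u1])
    have im: "\<And>h :: _ \<Rightarrow> real. (\<integral>a. h a \<partial>measure_pmf (mix u q1 q2)) = u * (\<integral>a. h a \<partial>measure_pmf q1) + (1 - u) * (\<integral>a. h a \<partial>measure_pmf q2)"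
      by (rule integral_mix[OF uv(1) u1 fin_plan[OF q(1)] fin_plan[OF q(2)]])
    have "u *\<^sub>R x + v *\<^sub>R y = (mq (mix u q1 q2), lq (mix u q1 q2), cq (mix u q1 q2))"
      unfolding q(3,4) v mq_def lq_def cq_def im by simp
    then show "u *\<^sub>R x + v *\<^sub>R y \<in> S" unfolding S_def using pm by blast
  qed
  have cU: "convex U"
  proof (rule convexI)
    fix x y :: "real \<times> real \<times> real" and u v :: real
    assume xy: "x \<in> U" "y \<in> U" and uv: "0 \<le> u" "0 \<le> v" "u + v = 1"
    from xy obtain l1 c1 l2 c2 where h: "x = (\<epsilon>, l1, c1)" "y = (\<epsilon>, l2, c2)" "l1 > 0" "c1 < \<delta>" "l2 > 0" "c2 < \<delta>"
      unfolding U_def by blast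
    have e: "u * \<epsilon> + v * \<epsilon> = \<epsilon>" using uv by (metis distrib_right mult_1)
    have "u * l1 + v * l2 > 0"
    proof (cases "u = 0")
      case True then show ?thesis using uv h by simp
    next
      case False then show ?thesis using uv h by (simp add: add_pos_nonneg)
    qed
    moreover have "u * c1 + v * c2 < \<delta>"
    proof (cases "u = 0")
      case True then show ?thesis using uv h by simp
    next
      case False
      then have "u * c1 < u * \<delta>" using uv h by simp
      moreover have "v * c2 \<le> v * \<delta>" using uv h by (intro mult_left_mono) auto
      ultimately have "u * c1 + v * c2 < u * \<delta> + v * \<delta>" by simp
      also have "\<dots> = \<delta>" using uv by (metis distrib_right mult_1)
      finally show ?thesis .
    qed
    ultimately show "u *\<^sub>R x + v *\<^sub>R y \<in> U" unfolding U_def h using e by auto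
  qed
  define one :: "nat \<Rightarrow> real" where "one = (\<lambda>i. 1)"
  define zer :: "nat \<Rightarrow> real" where "zer = (\<lambda>i. 0)"
  have q0: "is_plan N \<Xi> (det \<zeta> zer)" by (rule det_plan) (simp_all add: samples zer_def)
  have q0': "is_plan N \<Xi> (det \<zeta> one)" by (rule det_plan) (simp_all add: samples one_def)
  have Nn: "real N > 0" using N by simp
  have m0: "mq (det \<zeta> zer) = 0" "lq (det \<zeta> zer) = 0" "cq (det \<zeta> zer) = 0"
    unfolding det_m det_l det_c zer_def using nrm_props(1)[OF nrm] by simp_all
  have m1: "mq (det \<zeta> one) = 1" "cq (det \<zeta> one) = 0"
    unfolding det_m det_c one_def using nrm_props(1)[OF nrm] Nn by simp_all
  have neS: "S \<noteq> {}" unfolding S_def using q0 by blast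
  have "(\<epsilon>, 1, 0) \<in> U" unfolding U_def using delta by simp
  then have neU: "U \<noteq> {}" by blast
  have disj: "S \<inter> U = {}"
  proof (rule ccontr)
    assume "S \<inter> U \<noteq> {}"
    then obtain q where q: "is_plan N \<Xi> q" "mq q = \<epsilon>" "lq q > 0" "cq q < \<delta>"
      unfolding S_def U_def by auto
    let ?P = "distr (measure_pmf q) borel (\<lambda>a. fst (snd a))"
    have "?P \<in> ambiguity_set nrm \<Xi> N \<zeta> \<delta>"
      by (rule plan_measure[OF nrm N q(1) cl]) (use q(4) in \<open>simp add: cq_def\<close>)
    then have le0: "(INF \<beta>::real. ereal \<beta> + ereal (1 / \<epsilon>) * enn2ereal (\<integral>\<^sup>+ \<xi>. ennreal (max (Lf \<xi> - \<beta>) 0) \<partial>?P)) \<le> 0"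
      by (rule hyp)
    have "ereal (lq q / \<epsilon>) \<le> (INF \<beta>::real. ereal \<beta> + ereal (1 / \<epsilon>) * enn2ereal (\<integral>\<^sup>+ \<xi>. ennreal (max (Lf \<xi> - \<beta>) 0) \<partial>?P))"
    proof (rule INF_greatest)
      fix \<beta> :: real
      have "\<beta> + (lq q - \<beta> * mq q) / \<epsilon> = lq q / \<epsilon>" using q(2) eps by (simp add: field_simps)
      then show "ereal (lq q / \<epsilon>) \<le> ereal \<beta> + ereal (1 / \<epsilon>) * enn2ereal (\<integral>\<^sup>+ \<xi>. ennreal (max (Lf \<xi> - \<beta>) 0) \<partial>?P)"
        using plan_integral[OF N q(1) Lm eps(1), of \<beta>] unfolding lq_def mq_def by simp
    qed
    then have "ereal (lq q / \<epsilon>) \<le> 0" using le0 by (rule order_trans)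
    moreover have "lq q / \<epsilon> > 0" using q(3) eps by simp
    ultimately show False by simp
  qed
  obtain n \<gamma> where nb: "n \<noteq> 0" "\<forall>x\<in>S. inner n x \<le> \<gamma>" "\<forall>x\<in>U. inner n x \<ge> \<gamma>"
    using separating_hyperplane_sets[OF cS cU neS neU disj] by blast
  obtain A B C where n: "n = (A, B, C)" by (cases n) auto
  have hS: "A * mq q + B * lq q + C * cq q \<le> \<gamma>" if "is_plan N \<Xi> q" for q
    using nb(2) that unfolding S_def n by (auto simp: inner_real_def add.assoc)
  have hU: "A * \<epsilon> + B * l + C * c \<ge> \<gamma>" if "l > 0" "c < \<delta>" for l c
    using nb(3) that unfolding U_def n by (auto simp: inner_real_def add.assoc)
  have B0: "B \<ge> 0"
  proof (rule ccontr)
    assume "\<not> B \<ge> 0"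
    then have B: "B < 0" by simp
    define K where "K = \<bar>A * \<epsilon> + C * (\<delta> - 1)\<bar> + \<bar>\<gamma>\<bar> + 1"
    have Kp: "K > 0" unfolding K_def by (simp add: add_nonneg_pos)
    have "A * \<epsilon> + B * (K / (- B)) + C * (\<delta> - 1) \<ge> \<gamma>"
      by (rule hU) (use B Kp divide_pos_neg[OF Kp B] in simp_all)
    moreover have "B * (K / (- B)) = - K" using B by simp
    ultimately show False unfolding K_def by linarith
  qed
  have C0: "C \<le> 0"
  proof (rule ccontr)
    assume "\<not> C \<le> 0"
    then have C: "C > 0" by simp
    define K where "K = \<bar>A * \<epsilon> + B\<bar> + \<bar>\<gamma>\<bar> + \<delta> + 1"
    have Kp: "K > 0" unfolding K_def using delta by (simp add: add_nonneg_pos)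
    have "K / C > 0" using Kp C by simp
    then have "- K / C < \<delta>" using delta by simp
    then have "A * \<epsilon> + B * 1 + C * (- K / C) \<ge> \<gamma>"
      by (intro hU) simp_all
    moreover have "C * (- K / C) = - K" using C by simp
    ultimately have "\<gamma> \<le> A * \<epsilon> + B - K" by simp
    then show False unfolding K_def using abs_ge_self[of "A * \<epsilon> + B"] abs_ge_minus_self[of \<gamma>] delta by linarith
  qed
  have AC: "A * \<epsilon> + C * \<delta> \<ge> \<gamma>"
  proof (rule ccontr)
    assume nt: "\<not> ?thesis"
    define d where "d = \<gamma> - (A * \<epsilon> + C * \<delta>)"
    have d: "d > 0" using nt unfolding d_def by simp
    define X where "X = B - C + 1"
    define \<eta> where "\<eta> = d / (2 * X)"
    have den: "X > 0" unfolding X_def using B0 C0 by simp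
    have eta: "\<eta> > 0" unfolding \<eta>_def using d den by simp
    have "A * \<epsilon> + B * \<eta> + C * (\<delta> - \<eta>) \<ge> \<gamma>" by (rule hU) (use eta in simp_all)
    then have "\<eta> * (B - C) \<ge> d" unfolding d_def by (simp add: algebra_simps)
    moreover have "\<eta> * (B - C) < d"
    proof -
      have "\<eta> * (B - C) \<le> \<eta> * X" using eta unfolding X_def by simp
      also have "\<dots> = d / 2" unfolding \<eta>_def using den by simp
      finally show ?thesis using d by simp
    qed
    ultimately show False by simp
  qed
  have Bpos: "B > 0"
  proof (rule ccontr)
    assume "\<not> B > 0"
    then have B: "B = 0" using B0 by simp
    have "A * 1 + C * 0 \<le> \<gamma>" using hS[OF q0'] m1 B by simp
    moreover have "A * 0 + C * 0 \<le> \<gamma>" using hS[OF q0] m0 B by simp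
    ultimately have a1: "A \<le> A * \<epsilon> + C * \<delta>" and a2: "0 \<le> A * \<epsilon> + C * \<delta>" using AC by simp_all
    have "C * \<delta> \<le> 0" using C0 delta by (simp add: mult_nonpos_nonneg)
    then have "A * (1 - \<epsilon>) \<le> 0" using a1 by (simp add: algebra_simps)
    then have "A \<le> 0" using eps by (simp add: mult_le_0_iff)
    then have "A * \<epsilon> \<le> 0" using eps by (simp add: mult_nonpos_nonneg)
    then have ae: "A * \<epsilon> = 0" and cd: "C * \<delta> = 0" using a2 \<open>C * \<delta> \<le> 0\<close> by linarith+
    have "A = 0" "C = 0" using ae cd eps delta by simp_all
    then show False using nb(1) n B by (simp add: zero_prod_def)
  qed
  define p where "p = A / B"
  define lam where "lam = - C / B"
  have lam0: "lam \<ge> 0" unfolding lam_def using C0 Bpos by (simp add: divide_nonpos_pos)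
  have main: "lq q \<le> p * (\<epsilon> - mq q) + lam * (cq q - \<delta>)" if "is_plan N \<Xi> q" for q
  proof -
    have "B * lq q \<le> A * \<epsilon> + C * \<delta> - A * mq q - C * cq q" using hS[OF that] AC by simp
    then have "lq q \<le> (A * \<epsilon> + C * \<delta> - A * mq q - C * cq q) / B" using Bpos by (simp add: le_divide_eq mult.commute)
    also have "\<dots> = p * (\<epsilon> - mq q) + lam * (cq q - \<delta>)" unfolding p_def lam_def using Bpos
      by (simp add: field_simps)
    finally show ?thesis .
  qed
  have p0: "p \<ge> 0"
  proof -
    have "0 \<le> p * \<epsilon> - lam * \<delta>" using main[OF q0] m0 by simp
    then have "lam * \<delta> \<le> p * \<epsilon>" by simp
    moreover have "lam * \<delta> \<ge> 0" using lam0 delta by simp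
    ultimately have "p * \<epsilon> \<ge> 0" by simp
    then show ?thesis using eps by (simp add: zero_le_mult_iff)
  qed
  have ppos: "p > 0"
  proof (rule ccontr)
    assume "\<not> p > 0"
    then have p: "p = 0" using p0 by simp
    have "0 \<le> p * \<epsilon> - lam * \<delta>" using main[OF q0] m0 by simp
    then have "lam * \<delta> \<le> 0" using p by simp
    then have lz: "lam = 0" using lam0 delta by (simp add: mult_le_0_iff)
    have q1: "is_plan N \<Xi> (det (\<lambda>i. \<xi>0) one)" by (rule det_plan) (simp_all add: xi0 one_def)
    have "lq (det (\<lambda>i. \<xi>0) one) \<le> 0" using main[OF q1] p lz by simp
    moreover have "lq (det (\<lambda>i. \<xi>0) one) = Lf \<xi>0" unfolding det_l one_def using Nn by simp
    ultimately show False using xi0 by simp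
  qed
  show ?thesis
  proof (rule exI[of _ p], intro conjI ppos, rule exI[of _ lam], intro conjI lam0 allI impI)
    fix xs assume xs: "\<forall>i\<in>{1..N}. xs i \<in> \<Xi>"
    define us where "us i = (if Lf (xs i) + p \<ge> 0 then 1 else (0::real))" for i
    have qd: "is_plan N \<Xi> (det xs us)" by (rule det_plan) (simp_all add: xs us_def)
    have mx: "max (Lf (xs i) + p) 0 = us i * Lf (xs i) + p * us i" for i
      unfolding us_def by auto
    have "(\<Sum>i\<in>{1..N}. max (Lf (xs i) + p) 0 - lam * nrm (xs i - \<zeta> i)) / real N
        = lq (det xs us) + p * mq (det xs us) - lam * cq (det xs us)"
      unfolding det_l det_m det_c mx
      by (simp add: sum.distrib sum_subtractf sum_distrib_left add_divide_distrib diff_divide_distrib)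
    also have "\<dots> \<le> p * \<epsilon> - lam * \<delta>" using main[OF qd] by (simp add: algebra_simps)
    finally show "(\<Sum>i\<in>{1..N}. max (Lf (xs i) + p) 0 - lam * nrm (xs i - \<zeta> i)) / real N \<le> p * \<epsilon> - lam * \<delta>" .
  qed
qed

lemma hard_to_ZC2:
  fixes f :: "nat \<Rightarrow> real ^ 'n \<Rightarrow> real ^ 'm \<Rightarrow> real" and x :: "real ^ 'n"
    and \<zeta> :: "nat \<Rightarrow> real^'m"
  assumes nrm: "is_norm nrm" and N: "N \<ge> 1" and T: "T \<ge> 1" and eps: "0 < \<epsilon>" and delta: "\<delta> > 0"
    and cvx: "convex \<Xi>" and samples: "\<And>i. i \<in> {1..N} \<Longrightarrow> \<zeta> i \<in> \<Xi>"
    and alpha: "\<And>t. t \<in> {1..T} \<Longrightarrow> \<alpha> t > 0"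
    and fconv: "\<And>t. t \<in> {1..T} \<Longrightarrow> convex_on UNIV (\<lambda>\<xi>. f t x \<xi>)"
    and Lf: "Lf = (\<lambda>\<xi>. Max ((\<lambda>t. - \<alpha> t * f t x \<xi>) ` {1..T}))"
    and p: "p > 0" and lam: "lam \<ge> 0"
    and core: "\<And>xs. (\<forall>i\<in>{1..N}. xs i \<in> \<Xi>) \<Longrightarrow>
      (\<Sum>i\<in>{1..N}. max (Lf (xs i) + p) 0 - lam * nrm (xs i - \<zeta> i)) / real N \<le> p * \<epsilon> - lam * \<delta>"
  shows "x \<in> ZC2 f T \<Xi> nrm N \<zeta> \<delta> \<epsilon>"
proof -
  note np = nrm_props[OF nrm]
  define lam' where "lam' = lam / p"
  define \<alpha>' where "\<alpha>' t = \<alpha> t / p" for t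
  define g where "g i \<xi> = max (Lf \<xi> / p + 1) 0 - lam' * nrm (\<xi> - \<zeta> i)" for i \<xi>
  define K where "K = real N * (\<epsilon> - lam' * \<delta>)"
  have Nn: "real N > 0" using N by simp
  have lam'0: "lam' \<ge> 0" unfolding lam'_def using lam p by simp
  have core': "(\<Sum>i\<in>{1..N}. g i (xs i)) \<le> K" if xs: "\<forall>i\<in>{1..N}. xs i \<in> \<Xi>" for xs
  proof -
    have gi: "g i (xs i) = (max (Lf (xs i) + p) 0 - lam * nrm (xs i - \<zeta> i)) / p" for i
    proof -
      have "max (Lf (xs i) + p) 0 / p = max (Lf (xs i) / p + 1) 0"
        using p by (simp add: max_divide_distrib_right add_divide_distrib)
      then show ?thesis unfolding g_def lam'_def using p by (simp add: diff_divide_distrib)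
    qed
    have "(\<Sum>i\<in>{1..N}. g i (xs i)) = (\<Sum>i\<in>{1..N}. max (Lf (xs i) + p) 0 - lam * nrm (xs i - \<zeta> i)) / p"
      unfolding gi by (simp add: sum_divide_distrib)
    also have "\<dots> \<le> real N * (p * \<epsilon> - lam * \<delta>) / p"
      using core[OF xs] Nn p by (simp add: divide_right_mono pos_divide_le_eq mult.commute)
    also have "\<dots> = K" unfolding K_def lam'_def using p by (simp add: field_simps)
    finally show ?thesis .
  qed
  have g0: "g i (\<zeta> i) \<ge> 0" for i unfolding g_def using np(1) by simp
  have bdd: "bdd_above (g i ` \<Xi>)" if i: "i \<in> {1..N}" for i
  proof (rule bdd_aboveI2)
    fix \<xi> assume "\<xi> \<in> \<Xi>"
    let ?xs = "\<zeta>(i := \<xi>)"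
    have xs: "\<forall>j\<in>{1..N}. ?xs j \<in> \<Xi>" using samples \<open>\<xi> \<in> \<Xi>\<close> by auto
    have "(\<Sum>j\<in>{1..N}. g j (?xs j)) = g i \<xi> + (\<Sum>j\<in>{1..N} - {i}. g j (\<zeta> j))"
      using sum.remove[of "{1..N}" i "\<lambda>j. g j (?xs j)"] i by simp
    then show "g i \<xi> \<le> K - (\<Sum>j\<in>{1..N} - {i}. g j (\<zeta> j))" using core'[OF xs] by simp
  qed
  define s where "s i = (SUP \<xi>\<in>\<Xi>. g i \<xi>)" for i
  have neX: "\<Xi> \<noteq> {}" using samples[of 1] N by auto
  have s_ge: "g i \<xi> \<le> s i" if "i \<in> {1..N}" "\<xi> \<in> \<Xi>" for i \<xi>
    unfolding s_def by (rule cSUP_upper[OF that(2) bdd[OF that(1)]])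
  have s0: "s i \<ge> 0" if "i \<in> {1..N}" for i
    using g0[of i] s_ge[OF that samples[OF that]] by simp
  have ssum: "(\<Sum>i\<in>{1..N}. s i) \<le> K"
  proof (rule ccontr)
    assume nt: "\<not> ?thesis"
    define \<eta> where "\<eta> = ((\<Sum>i\<in>{1..N}. s i) - K) / real N"
    have eta: "\<eta> > 0" unfolding \<eta>_def using nt Nn by simp
    have "\<forall>i\<in>{1..N}. \<exists>\<xi>\<in>\<Xi>. s i - \<eta> < g i \<xi>"
    proof
      fix i assume i: "i \<in> {1..N}"
      have "s i - \<eta> < s i" using eta by simp
      then show "\<exists>\<xi>\<in>\<Xi>. s i - \<eta> < g i \<xi>"
        unfolding s_def using less_cSUP_iff[OF neX bdd[OF i]] by (simp add: s_def)
    qed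
    then obtain xs where xs: "\<forall>i\<in>{1..N}. xs i \<in> \<Xi> \<and> s i - \<eta> < g i (xs i)"
      by metis
    have "(\<Sum>i\<in>{1..N}. s i - \<eta>) < (\<Sum>i\<in>{1..N}. g i (xs i))"
      by (rule sum_strict_mono) (use xs N in auto)
    moreover have "(\<Sum>i\<in>{1..N}. s i - \<eta>) = K"
      unfolding sum_subtractf \<eta>_def using Nn by simp
    moreover have "(\<Sum>i\<in>{1..N}. g i (xs i)) \<le> K" using core' xs by blast
    ultimately show False by simp
  qed
  have Lge: "- \<alpha> t * f t x \<xi> \<le> Lf \<xi>" if "t \<in> {1..T}" for t \<xi>
    unfolding Lf by (rule Max_ge) (use that in auto)
  have hb: "\<exists>w. (\<forall>v. w \<bullet> v \<le> lam' * nrm v) \<and>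
      (\<forall>\<xi>\<in>\<Xi>. - \<alpha>' t * f t x \<xi> + 1 - s i \<le> w \<bullet> (\<xi> - \<zeta> i))"
    if it: "i \<in> {1..N}" "t \<in> {1..T}" for i t
  proof (rule hb_sandwich[OF nrm cvx samples[OF it(1)] _ lam'0])
    fix x1 x2 :: "real^'m" and u :: real
    assume h: "x1 \<in> \<Xi>" "x2 \<in> \<Xi>" "0 \<le> u" "u \<le> 1"
    have "f t x (u *\<^sub>R x1 + (1 - u) *\<^sub>R x2) \<le> u * f t x x1 + (1 - u) * f t x x2"
      using convex_onD[OF fconv[OF it(2)], of "1 - u" x1 x2] h by simp
    then have "- \<alpha>' t * f t x (u *\<^sub>R x1 + (1 - u) *\<^sub>R x2) \<ge> - \<alpha>' t * (u * f t x x1 + (1 - u) * f t x x2)"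
      using alpha[OF it(2)] p unfolding \<alpha>'_def by (intro mult_left_mono_neg) simp_all
    then show "u * (- \<alpha>' t * f t x x1 + 1 - s i) + (1 - u) * (- \<alpha>' t * f t x x2 + 1 - s i)
        \<le> - \<alpha>' t * f t x (u *\<^sub>R x1 + (1 - u) *\<^sub>R x2) + 1 - s i"
      by (simp add: algebra_simps)
  next
    fix \<xi> assume \<xi>: "\<xi> \<in> \<Xi>"
    have "- \<alpha>' t * f t x \<xi> = (- \<alpha> t * f t x \<xi>) / p" unfolding \<alpha>'_def by simp
    also have "\<dots> \<le> Lf \<xi> / p" using divide_right_mono[OF Lge[OF it(2), of \<xi>], of p] p by simp
    finally have "- \<alpha>' t * f t x \<xi> + 1 - s i \<le> max (Lf \<xi> / p + 1) 0 - s i" by simp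
    also have "\<dots> \<le> max (Lf \<xi> / p + 1) 0 - g i \<xi>" using s_ge[OF it(1) \<xi>] by simp
    also have "\<dots> = lam' * nrm (\<xi> - \<zeta> i)" unfolding g_def by simp
    finally show "- \<alpha>' t * f t x \<xi> + 1 - s i \<le> lam' * nrm (\<xi> - \<zeta> i)" .
  qed
  have "\<forall>it. \<exists>w. fst it \<in> {1..N} \<and> snd it \<in> {1..T} \<longrightarrow> (\<forall>v. w \<bullet> v \<le> lam' * nrm v) \<and>
      (\<forall>\<xi>\<in>\<Xi>. - \<alpha>' (snd it) * f (snd it) x \<xi> + 1 - s (fst it) \<le> w \<bullet> (\<xi> - \<zeta> (fst it)))"
    using hb by blast
  then obtain W where W: "\<And>i t. i \<in> {1..N} \<Longrightarrow> t \<in> {1..T} \<Longrightarrow> (\<forall>v. W (i, t) \<bullet> v \<le> lam' * nrm v) \<and>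
      (\<forall>\<xi>\<in>\<Xi>. - \<alpha>' t * f t x \<xi> + 1 - s i \<le> W (i, t) \<bullet> (\<xi> - \<zeta> i))"
    by (metis fst_conv snd_conv)
  define z where "z i t = - W (i, t)" for i t
  show ?thesis unfolding ZC2_def
  proof (rule CollectI, rule exI[of _ lam'], rule exI[of _ \<alpha>'], rule exI[of _ s], rule exI[of _ z], intro conjI ballI lam'0)
    fix t assume "t \<in> {1..T}"
    then show "\<alpha>' t \<ge> 0" unfolding \<alpha>'_def using alpha p by (simp add: less_imp_le)
  next
    fix i assume "i \<in> {1..N}" then show "s i \<ge> 0" by (rule s0)
  next
    have "(\<Sum>i\<in>{1..N}. s i) / real N \<le> \<epsilon> - lam' * \<delta>"
      using ssum Nn unfolding K_def by (simp add: divide_le_eq mult.commute)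
    then show "lam' * \<delta> + 1 / real N * (\<Sum>i\<in>{1..N}. s i) \<le> \<epsilon>" by simp
  next
    fix i t assume it: "i \<in> {1..N}" "t \<in> {1..T}"
    note Wit = W[OF it]
    have "G_fun f \<Xi> t (z i t) (\<alpha>' t) x \<le> ereal (- (1 - z i t \<bullet> \<zeta> i - s i))"
      unfolding G_fun_def
    proof (rule SUP_least)
      fix \<xi> assume \<xi>: "\<xi> \<in> \<Xi>"
      have "- \<alpha>' t * f t x \<xi> + 1 - s i \<le> W (i, t) \<bullet> (\<xi> - \<zeta> i)" using Wit \<xi> by blast
      then show "ereal (z i t \<bullet> \<xi> - \<alpha>' t * f t x \<xi>) \<le> ereal (- (1 - z i t \<bullet> \<zeta> i - s i))"
        unfolding z_def by (simp add: inner_diff_right)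
    qed
    then have "G_fun f \<Xi> t (z i t) (\<alpha>' t) x + ereal (1 - z i t \<bullet> \<zeta> i - s i)
        \<le> ereal (- (1 - z i t \<bullet> \<zeta> i - s i)) + ereal (1 - z i t \<bullet> \<zeta> i - s i)"
      by (rule add_right_mono)
    then show "G_fun f \<Xi> t (z i t) (\<alpha>' t) x + ereal (1 - z i t \<bullet> \<zeta> i - s i) \<le> 0" by (simp add: zero_ereal_def)
  next
    fix i t assume it: "i \<in> {1..N}" "t \<in> {1..T}"
    have "dual_norm nrm (z i t) \<le> lam'"
    proof (rule dual_norm_le[OF nrm _ lam'0])
      fix v
      have "W (i, t) \<bullet> (- v) \<le> lam' * nrm (- v)" using W[OF it] by blast
      then show "z i t \<bullet> v \<le> lam' * nrm v" unfolding z_def using np(2) by simp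
    qed
    then show "dual_norm nrm (z i t) - lam' \<le> 0" by simp
  qed
qed

lemma AE_of_emeasure1:
  assumes "prob_space M" "emeasure M A = 1"
  shows "AE x in M. x \<in> A"
proof -
  have "measure M A = 1" using assms(2) by (simp add: measure_def)
  then show ?thesis by (rule prob_space.AE_prob_1[OF assms(1)])
qed

lemma sum_indicator_single:
  fixes c :: "'a \<Rightarrow> real"
  assumes "finite K"
  shows "(\<Sum>k\<in>K. indicator {k} y * c k) = (if y \<in> K then c y else 0)"
proof -
  have "(\<Sum>k\<in>K. indicator {k} y * c k) = (\<Sum>k\<in>K. if y = k then c k else 0)"
    by (rule sum.cong) (auto simp: indicator_def)
  also have "\<dots> = (if y \<in> K then c y else 0)" using assms by (simp add: sum.delta)
  finally show ?thesis .
qed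

lemma weak_bound:
  fixes g :: "real^'m \<Rightarrow> real" and \<zeta> :: "nat \<Rightarrow> real^'m"
  assumes nrm: "is_norm nrm" and N: "N \<ge> 1" and cl: "closed \<Xi>"
    and gm: "g \<in> borel_measurable borel" and lam: "lam \<ge> 0" and delta: "\<delta> > 0" and eps: "\<epsilon> > 0"
    and s0: "\<And>i. i \<in> {1..N} \<Longrightarrow> s i \<ge> 0"
    and pw: "\<And>\<xi> i. \<xi> \<in> \<Xi> \<Longrightarrow> i \<in> {1..N} \<Longrightarrow> g \<xi> \<le> s i + lam * nrm (\<xi> - \<zeta> i)"
    and bud: "lam * \<delta> + 1 / real N * (\<Sum>i\<in>{1..N}. s i) \<le> \<epsilon>"
    and P: "P \<in> ambiguity_set nrm \<Xi> N \<zeta> \<delta>"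
  shows "(\<integral>\<^sup>+ \<xi>. ennreal (g \<xi>) \<partial>P) \<le> ennreal \<epsilon>"
proof (rule ennreal_le_epsilon)
  fix e :: real assume e: "e > 0"
  note np = nrm_props[OF nrm]
  have Pp: "prob_space P" "sets P = sets borel" "emeasure P \<Xi> = 1"
    and W: "wasserstein1 nrm P (emp_dist N \<zeta>) \<le> ennreal \<delta>"
    using P unfolding ambiguity_set_def by auto
  define \<eta> where "\<eta> = e / (lam + 1)"
  have eta: "\<eta> > 0" unfolding \<eta>_def using e lam by simp
  have lameta: "lam * \<eta> \<le> e"
  proof -
    have "lam * \<eta> \<le> (lam + 1) * \<eta>" using eta by simp
    also have "\<dots> = e" unfolding \<eta>_def using lam by simp
    finally show ?thesis .
  qed
  have d0: "\<delta> \<ge> 0" using delta by simp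
  have "wasserstein1 nrm P (emp_dist N \<zeta>) < ennreal (\<delta> + \<eta>)"
  proof -
    have "ennreal \<delta> < ennreal (\<delta> + \<eta>)" using eta d0 by (simp add: ennreal_lessI)
    then show ?thesis using W by (rule le_less_trans[rotated])
  qed
  then obtain \<pi> where \<pi>: "\<pi> \<in> couplings P (emp_dist N \<zeta>)"
      and \<pi>c: "(\<integral>\<^sup>+ p. ennreal (nrm (fst p - snd p)) \<partial>\<pi>) < ennreal (\<delta> + \<eta>)"
    unfolding wasserstein1_def by (auto simp: INF_less_iff)
  have \<pi>p: "prob_space \<pi>" and s\<pi>: "sets \<pi> = sets (borel \<Otimes>\<^sub>M borel)"
    and m1: "distr \<pi> borel fst = P" and m2: "distr \<pi> borel snd = emp_dist N \<zeta>"
    using \<pi> unfolding couplings_def by auto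
  have mfst: "fst \<in> measurable \<pi> borel" using measurable_cong_sets[OF s\<pi> refl] measurable_fst by blast
  have msnd: "snd \<in> measurable \<pi> borel" using measurable_cong_sets[OF s\<pi> refl] measurable_snd by blast
  define K where "K = \<zeta> ` {1..N}"
  have finK: "finite K" unfolding K_def by simp
  define c where "c k = Min (s ` {j\<in>{1..N}. \<zeta> j = k})" for k
  define h where "h y = (\<Sum>k\<in>K. indicator {k} y * c k)" for y
  have hK: "h y = (if y \<in> K then c y else 0)" for y unfolding h_def by (rule sum_indicator_single[OF finK])
  have c_le: "c (\<zeta> i) \<le> s i" if "i \<in> {1..N}" for i
    unfolding c_def using that by (intro Min_le) auto
  have c_in: "\<exists>j\<in>{1..N}. \<zeta> j = k \<and> c k = s j" if "k \<in> K" for k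
  proof -
    have ne: "s ` {j\<in>{1..N}. \<zeta> j = k} \<noteq> {}" using that unfolding K_def by auto
    have "c k \<in> s ` {j\<in>{1..N}. \<zeta> j = k}" unfolding c_def by (rule Min_in) (use ne in auto)
    then show ?thesis by auto
  qed
  have hm: "h \<in> borel_measurable borel" unfolding h_def by measurable
  have AE1: "AE p in \<pi>. fst p \<in> \<Xi>"
  proof -
    have "emeasure \<pi> (fst -` \<Xi> \<inter> space \<pi>) = emeasure (distr \<pi> borel fst) \<Xi>"
      by (rule emeasure_distr[symmetric, OF mfst]) (simp add: borel_closed[OF cl])
    also have "\<dots> = 1" using m1 Pp by simp
    finally show ?thesis using AE_of_emeasure1[OF \<pi>p] by fastforce
  qed
  have AE2: "AE p in \<pi>. snd p \<in> K"
  proof -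
    have Kb: "K \<in> sets borel" using finK by (simp add: borel_closed finite_imp_closed)
    have "emeasure \<pi> (snd -` K \<inter> space \<pi>) = emeasure (distr \<pi> borel snd) K"
      by (rule emeasure_distr[symmetric, OF msnd Kb])
    also have "\<dots> = emeasure (emp_dist N \<zeta>) K" using m2 by simp
    also have "\<dots> = emeasure (measure_pmf (pmf_of_set {1..N})) (\<zeta> -` K \<inter> space (measure_pmf (pmf_of_set {1..N})))"
      unfolding emp_dist_def by (rule emeasure_distr) (simp_all add: Kb)
    also have "\<dots> = 1"
      by (rule measure_pmf.emeasure_eq_1_AE) (use N in \<open>auto simp: AE_measure_pmf_iff K_def\<close>)
    finally show ?thesis using AE_of_emeasure1[OF \<pi>p] by fastforce
  qed
  have nm: "(\<lambda>p::(real^'m)\<times>(real^'m). ennreal (nrm (fst p - snd p))) \<in> borel_measurable \<pi>"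
  proof -
    have dm: "(\<lambda>p::(real^'m) \<times> (real^'m). fst p - snd p) \<in> borel_measurable \<pi>"
      using mfst msnd by measurable
    show ?thesis using measurable_compose[OF dm nrm_meas[OF nrm]] by measurable
  qed
  have "(\<integral>\<^sup>+ \<xi>. ennreal (g \<xi>) \<partial>P) = (\<integral>\<^sup>+ p. ennreal (g (fst p)) \<partial>\<pi>)"
    unfolding m1[symmetric] by (rule nn_integral_distr[OF mfst]) (use gm in simp)
  also have "\<dots> \<le> (\<integral>\<^sup>+ p. ennreal (h (snd p)) + ennreal lam * ennreal (nrm (fst p - snd p)) \<partial>\<pi>)"
  proof (rule nn_integral_mono_AE)
    show "AE p in \<pi>. ennreal (g (fst p)) \<le> ennreal (h (snd p)) + ennreal lam * ennreal (nrm (fst p - snd p))"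
      using AE1 AE2
    proof eventually_elim
      case (elim p)
      obtain j where j: "j \<in> {1..N}" "\<zeta> j = snd p" "c (snd p) = s j" using c_in[OF elim(2)] by blast
      have "g (fst p) \<le> s j + lam * nrm (fst p - snd p)" using pw[OF elim(1) j(1)] j(2) by simp
      also have "\<dots> = h (snd p) + lam * nrm (fst p - snd p)" using hK[of "snd p"] elim(2) j(3) by simp
      finally have "ennreal (g (fst p)) \<le> ennreal (h (snd p) + lam * nrm (fst p - snd p))"
        by (rule ennreal_leI)
      also have "\<dots> = ennreal (h (snd p)) + ennreal lam * ennreal (nrm (fst p - snd p))"
      proof -
        have "h (snd p) \<ge> 0" using s0[OF j(1)] j(3) hK[of "snd p"] elim(2) by simp
        then show ?thesis using lam np(3) by (simp add: ennreal_plus ennreal_mult)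
      qed
      finally show ?case .
    qed
  qed
  also have "\<dots> = (\<integral>\<^sup>+ p. ennreal (h (snd p)) \<partial>\<pi>) + ennreal lam * (\<integral>\<^sup>+ p. ennreal (nrm (fst p - snd p)) \<partial>\<pi>)"
    using hm msnd nm by (subst nn_integral_add) (auto simp: nn_integral_cmult)
  also have "(\<integral>\<^sup>+ p. ennreal (h (snd p)) \<partial>\<pi>) = (\<integral>\<^sup>+ y. ennreal (h y) \<partial>emp_dist N \<zeta>)"
    unfolding m2[symmetric] by (rule nn_integral_distr[OF msnd, symmetric]) (use hm in simp)
  also have "\<dots> = (\<integral>\<^sup>+ i. ennreal (h (\<zeta> i)) \<partial>measure_pmf (pmf_of_set {1..N}))"
    unfolding emp_dist_def by (rule nn_integral_distr) (use hm in simp_all)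
  also have "\<dots> = (\<Sum>i\<in>{1..N}. ennreal (h (\<zeta> i))) / ennreal (real N)"
    using N by (subst nn_integral_pmf_of_set) (simp_all add: ennreal_of_nat_eq_real_of_nat)
  also have "\<dots> \<le> ennreal ((\<Sum>i\<in>{1..N}. s i) / real N)"
  proof -
    have "(\<Sum>i\<in>{1..N}. ennreal (h (\<zeta> i))) \<le> (\<Sum>i\<in>{1..N}. ennreal (s i))"
    proof (rule sum_mono)
      fix i assume i: "i \<in> {1..N}"
      have "\<zeta> i \<in> K" unfolding K_def using i by simp
      then have "h (\<zeta> i) = c (\<zeta> i)" using hK by simp
      then show "ennreal (h (\<zeta> i)) \<le> ennreal (s i)" using c_le[OF i] by (simp add: ennreal_leI)
    qed
    also have "\<dots> = ennreal (\<Sum>i\<in>{1..N}. s i)" using s0 by (intro sum_ennreal) auto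
    finally have "(\<Sum>i\<in>{1..N}. ennreal (h (\<zeta> i))) / ennreal (real N) \<le> ennreal (\<Sum>i\<in>{1..N}. s i) / ennreal (real N)"
      by (rule divide_right_mono_ennreal)
    also have "\<dots> = ennreal ((\<Sum>i\<in>{1..N}. s i) / real N)"
    proof (rule divide_ennreal)
      show "0 \<le> (\<Sum>i\<in>{1..N}. s i)" by (intro sum_nonneg) (use s0 in auto)
      show "0 < real N" using N by simp
    qed
    finally show ?thesis .
  qed
  finally have "(\<integral>\<^sup>+ \<xi>. ennreal (g \<xi>) \<partial>P) \<le> ennreal ((\<Sum>i\<in>{1..N}. s i) / real N) + ennreal lam * (\<integral>\<^sup>+ p. ennreal (nrm (fst p - snd p)) \<partial>\<pi>)"
    by (simp add: add_right_mono)
  also have "\<dots> \<le> ennreal ((\<Sum>i\<in>{1..N}. s i) / real N) + ennreal lam * ennreal (\<delta> + \<eta>)"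
    using \<pi>c by (intro add_left_mono mult_left_mono) simp_all
  also have "\<dots> = ennreal ((\<Sum>i\<in>{1..N}. s i) / real N + lam * (\<delta> + \<eta>))"
  proof -
    have a0: "0 \<le> (\<Sum>i\<in>{1..N}. s i) / real N" by (intro divide_nonneg_nonneg sum_nonneg) (use s0 in auto)
    have de: "0 \<le> \<delta> + \<eta>" using d0 eta by simp
    have "ennreal lam * ennreal (\<delta> + \<eta>) = ennreal (lam * (\<delta> + \<eta>))" using ennreal_mult[OF lam de] by simp
    moreover have "ennreal ((\<Sum>i\<in>{1..N}. s i) / real N + lam * (\<delta> + \<eta>)) = ennreal ((\<Sum>i\<in>{1..N}. s i) / real N) + ennreal (lam * (\<delta> + \<eta>))"
      by (rule ennreal_plus[OF a0]) (use lam de in simp)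
    ultimately show ?thesis by simp
  qed
  also have "\<dots> \<le> ennreal (\<epsilon> + e)"
  proof (rule ennreal_leI)
    have "(\<Sum>i\<in>{1..N}. s i) / real N + lam * (\<delta> + \<eta>) = lam * \<delta> + 1 / real N * (\<Sum>i\<in>{1..N}. s i) + lam * \<eta>"
      by (simp add: algebra_simps)
    then show "(\<Sum>i\<in>{1..N}. s i) / real N + lam * (\<delta> + \<eta>) \<le> \<epsilon> + e" using bud lameta by simp
  qed
  also have "\<dots> = ennreal \<epsilon> + ennreal e" using eps e by (simp add: ennreal_plus)
  finally show "(\<integral>\<^sup>+ \<xi>. ennreal (g \<xi>) \<partial>P) \<le> ennreal \<epsilon> + ennreal e" .
qed

theorem proposition1:
  fixes f :: "nat \<Rightarrow> real ^ 'n \<Rightarrow> real ^ 'm \<Rightarrow> real"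
    and T N :: nat and \<epsilon> \<delta> :: real
    and \<Xi> :: "(real ^ 'm) set" and \<zeta> :: "nat \<Rightarrow> real ^ 'm"
    and nrm :: "real ^ 'm \<Rightarrow> real"
  assumes T: "T \<ge> 1" and N: "N \<ge> 1"
    and eps: "0 < \<epsilon>" "\<epsilon> < 1" and delta: "\<delta> > 0"
    and nrm: "is_norm nrm"
    and A1_convex: "\<And>t x. t \<in> {1..T} \<Longrightarrow> convex_on UNIV (\<lambda>\<xi>. f t x \<xi>) \<and> continuous_on UNIV (\<lambda>\<xi>. f t x \<xi>)"
    and A1_concave: "\<And>t \<xi>. t \<in> {1..T} \<Longrightarrow> concave_on UNIV (\<lambda>x. f t x \<xi>) \<and> continuous_on UNIV (\<lambda>x. f t x \<xi>)"
    and A2: "\<Xi> \<noteq> {}" "closed \<Xi>" "convex \<Xi>"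
    and samples: "\<And>i. i \<in> {1..N} \<Longrightarrow> \<zeta> i \<in> \<Xi>"
  shows "ZC f T \<epsilon> (ambiguity_set nrm \<Xi> N \<zeta> \<delta>) = ZC1 f T \<Xi> \<union> ZC2 f T \<Xi> nrm N \<zeta> \<delta> \<epsilon>"
proof -
  note np = nrm_props[OF nrm]
  let ?PW = "ambiguity_set nrm \<Xi> N \<zeta> \<delta>"
  have Tne: "{1..T} \<noteq> {}" using T by simp
  have Lm: "(\<lambda>\<xi>. Max ((\<lambda>t. - \<alpha> t * f t x \<xi>) ` {1..T})) \<in> borel_measurable borel" for \<alpha> x
  proof (rule borel_measurable_Max)
    fix t assume t: "t \<in> {1..T}"
    have "(\<lambda>\<xi>. f t x \<xi>) \<in> borel_measurable borel"
      using A1_convex[OF t] by (intro borel_measurable_continuous_onI) simp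
    then show "(\<lambda>\<xi>. - \<alpha> t * f t x \<xi>) \<in> borel_measurable borel" by measurable
  qed simp
  have ZCmem: "x \<in> ZC f T \<epsilon> ?PW \<longleftrightarrow> (\<exists>\<alpha>. (\<forall>t\<in>{1..T}. \<alpha> t > 0) \<and>
      (SUP P\<in>?PW. INF \<beta>::real. ereal \<beta> + ereal (1 / \<epsilon>) *
        enn2ereal (\<integral>\<^sup>+ \<xi>. ennreal (max (Max ((\<lambda>t. - \<alpha> t * f t x \<xi>) ` {1..T}) - \<beta>) 0) \<partial>P)) \<le> 0)" for x
    unfolding ZC_def ZC_alpha_def by blast
  show ?thesis
  proof (rule set_eqI, rule iffI)
    fix x assume "x \<in> ZC f T \<epsilon> ?PW"
    then obtain \<alpha> where \<alpha>: "\<forall>t\<in>{1..T}. \<alpha> t > 0"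
      and sup: "(SUP P\<in>?PW. INF \<beta>::real. ereal \<beta> + ereal (1 / \<epsilon>) *
        enn2ereal (\<integral>\<^sup>+ \<xi>. ennreal (max (Max ((\<lambda>t. - \<alpha> t * f t x \<xi>) ` {1..T}) - \<beta>) 0) \<partial>P)) \<le> 0"
      using iffD1[OF ZCmem] by blast
    define Lf where "Lf = (\<lambda>\<xi>. Max ((\<lambda>t. - \<alpha> t * f t x \<xi>) ` {1..T}))"
    show "x \<in> ZC1 f T \<Xi> \<union> ZC2 f T \<Xi> nrm N \<zeta> \<delta> \<epsilon>"
    proof (cases "x \<in> ZC1 f T \<Xi>")
      case True then show ?thesis by simp
    next
      case False
      then obtain \<xi>0 t0 where x0: "\<xi>0 \<in> \<Xi>" "t0 \<in> {1..T}" "f t0 x \<xi>0 < 0"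
        unfolding ZC1_def by (auto simp: not_le)
      have "- \<alpha> t0 * f t0 x \<xi>0 \<le> Lf \<xi>0" unfolding Lf_def by (rule Max_ge) (use x0 in auto)
      moreover have "- \<alpha> t0 * f t0 x \<xi>0 > 0" using \<alpha> x0 by (simp add: mult_pos_neg)
      ultimately have L0: "Lf \<xi>0 > 0" by simp
      have hyp: "(INF \<beta>::real. ereal \<beta> + ereal (1 / \<epsilon>) * enn2ereal (\<integral>\<^sup>+ \<xi>. ennreal (max (Lf \<xi> - \<beta>) 0) \<partial>P)) \<le> 0"
        if "P \<in> ?PW" for P
        using order_trans[OF SUP_upper[OF that] sup] unfolding Lf_def .
      obtain p lam where p: "p > 0" "lam \<ge> 0" and core: "\<forall>xs. (\<forall>i\<in>{1..N}. xs i \<in> \<Xi>) \<longrightarrow>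
          (\<Sum>i\<in>{1..N}. max (Lf (xs i) + p) 0 - lam * nrm (xs i - \<zeta> i)) / real N \<le> p * \<epsilon> - lam * \<delta>"
      proof -
        have LfM: "Lf \<in> borel_measurable borel" unfolding Lf_def by (rule Lm)
        show ?thesis
          using hard_core[where Lf=Lf and \<zeta>=\<zeta> and \<Xi>=\<Xi>, OF nrm N eps delta A2(2) samples LfM hyp x0(1) L0] that
          by blast
      qed
      have core': "\<And>xs. (\<forall>i\<in>{1..N}. xs i \<in> \<Xi>) \<Longrightarrow>
          (\<Sum>i\<in>{1..N}. max (Lf (xs i) + p) 0 - lam * nrm (xs i - \<zeta> i)) / real N \<le> p * \<epsilon> - lam * \<delta>"
        using core by blast
      have "x \<in> ZC2 f T \<Xi> nrm N \<zeta> \<delta> \<epsilon>"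
        by (rule hard_to_ZC2[where f=f and x=x and \<alpha>=\<alpha> and \<zeta>=\<zeta> and \<Xi>=\<Xi> and Lf=Lf and p=p and lam=lam,
              OF nrm N T eps(1) delta A2(3) samples \<alpha>[rule_format] conjunct1[OF A1_convex] Lf_def p core'])
      then show ?thesis by simp
    qed
  next
    fix x assume x: "x \<in> ZC1 f T \<Xi> \<union> ZC2 f T \<Xi> nrm N \<zeta> \<delta> \<epsilon>"
    show "x \<in> ZC f T \<epsilon> ?PW"
    proof (cases "x \<in> ZC1 f T \<Xi>")
      case True
      then have fpos: "\<And>\<xi> t. \<xi> \<in> \<Xi> \<Longrightarrow> t \<in> {1..T} \<Longrightarrow> f t x \<xi> \<ge> 0" unfolding ZC1_def by blast
      define \<alpha> :: "nat \<Rightarrow> real" where "\<alpha> = (\<lambda>t. 1)"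
      have "(SUP P\<in>?PW. INF \<beta>::real. ereal \<beta> + ereal (1 / \<epsilon>) *
        enn2ereal (\<integral>\<^sup>+ \<xi>. ennreal (max (Max ((\<lambda>t. - \<alpha> t * f t x \<xi>) ` {1..T}) - \<beta>) 0) \<partial>P)) \<le> 0"
      proof (rule SUP_least)
        fix P assume P: "P \<in> ?PW"
        have Pp: "prob_space P" "emeasure P \<Xi> = 1" using P unfolding ambiguity_set_def by auto
        have AE: "AE \<xi> in P. \<xi> \<in> \<Xi>" by (rule AE_of_emeasure1[OF Pp])
        have "(\<integral>\<^sup>+ \<xi>. ennreal (max (Max ((\<lambda>t. - \<alpha> t * f t x \<xi>) ` {1..T}) - 0) 0) \<partial>P) = (\<integral>\<^sup>+ \<xi>. 0 \<partial>P)"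
        proof (rule nn_integral_cong_AE)
          show "AE \<xi> in P. ennreal (max (Max ((\<lambda>t. - \<alpha> t * f t x \<xi>) ` {1..T}) - 0) 0) = 0"
            using AE
          proof eventually_elim
            case (elim \<xi>)
            have "Max ((\<lambda>t. - \<alpha> t * f t x \<xi>) ` {1..T}) \<le> 0"
              using fpos[OF elim] Tne by (simp add: \<alpha>_def)
            then show ?case by simp
          qed
        qed
        then have z0: "ereal 0 + ereal (1 / \<epsilon>) * enn2ereal (\<integral>\<^sup>+ \<xi>. ennreal (max (Max ((\<lambda>t. - \<alpha> t * f t x \<xi>) ` {1..T}) - 0) 0) \<partial>P) \<le> 0"
          by (simp add: zero_ennreal.rep_eq)
        show "(INF \<beta>::real. ereal \<beta> + ereal (1 / \<epsilon>) *
          enn2ereal (\<integral>\<^sup>+ \<xi>. ennreal (max (Max ((\<lambda>t. - \<alpha> t * f t x \<xi>) ` {1..T}) - \<beta>) 0) \<partial>P)) \<le> 0"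
          by (rule INF_lower2[of 0 UNIV "\<lambda>\<beta>::real. ereal \<beta> + ereal (1 / \<epsilon>) *
          enn2ereal (\<integral>\<^sup>+ \<xi>. ennreal (max (Max ((\<lambda>t. - \<alpha> t * f t x \<xi>) ` {1..T}) - \<beta>) 0) \<partial>P)", OF UNIV_I z0])
      qed
      moreover have "\<forall>t\<in>{1..T}. \<alpha> t > 0" unfolding \<alpha>_def by simp
      ultimately show ?thesis by (intro iffD2[OF ZCmem] exI[of _ \<alpha>] conjI)
    next
      case False
      then have "x \<in> ZC2 f T \<Xi> nrm N \<zeta> \<delta> \<epsilon>" using x by simp
      then obtain lam \<alpha> s z where lam: "lam \<ge> 0" and a0: "\<forall>t\<in>{1..T}. \<alpha> t \<ge> 0"
        and s0: "\<forall>i\<in>{1..N}. s i \<ge> 0"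
        and bud: "lam * \<delta> + (1 / real N) * (\<Sum>i=1..N. s i) \<le> \<epsilon>"
        and G: "\<forall>i\<in>{1..N}. \<forall>t\<in>{1..T}. G_fun f \<Xi> t (z i t) (\<alpha> t) x + ereal (1 - z i t \<bullet> \<zeta> i - s i) \<le> 0"
        and dn: "\<forall>i\<in>{1..N}. \<forall>t\<in>{1..T}. dual_norm nrm (z i t) - lam \<le> 0"
        unfolding ZC2_def by blast
      have Gpt: "z i t \<bullet> \<xi> - \<alpha> t * f t x \<xi> + (1 - z i t \<bullet> \<zeta> i - s i) \<le> 0"
        if "i \<in> {1..N}" "t \<in> {1..T}" "\<xi> \<in> \<Xi>" for i t \<xi>
      proof -
        have "ereal (z i t \<bullet> \<xi> - \<alpha> t * f t x \<xi>) \<le> G_fun f \<Xi> t (z i t) (\<alpha> t) x"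
          unfolding G_fun_def by (rule SUP_upper[OF that(3)])
        then have "ereal (z i t \<bullet> \<xi> - \<alpha> t * f t x \<xi>) + ereal (1 - z i t \<bullet> \<zeta> i - s i)
            \<le> G_fun f \<Xi> t (z i t) (\<alpha> t) x + ereal (1 - z i t \<bullet> \<zeta> i - s i)"
          by (rule add_right_mono)
        also have "\<dots> \<le> 0" using G that by blast
        finally show ?thesis by (simp add: zero_ereal_def)
      qed
      have apos: "\<forall>t\<in>{1..T}. \<alpha> t > 0"
      proof (rule ballI, rule ccontr)
        fix t assume t: "t \<in> {1..T}" and "\<not> \<alpha> t > 0"
        then have at: "\<alpha> t = 0" using a0 by force
        have "s i \<ge> 1" if i: "i \<in> {1..N}" for i
          using Gpt[OF i t samples[OF i]] at by simp
        then have "(\<Sum>i=1..N. s i) \<ge> (\<Sum>i=1..N. 1)" by (intro sum_mono) auto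
        then have "(\<Sum>i=1..N. s i) \<ge> real N" by simp
        then have "(1 / real N) * (\<Sum>i=1..N. s i) \<ge> 1" using N by (simp add: field_simps)
        moreover have "lam * \<delta> \<ge> 0" using lam delta by simp
        ultimately show False using bud eps by simp
      qed
      define Lf where "Lf = (\<lambda>\<xi>. Max ((\<lambda>t. - \<alpha> t * f t x \<xi>) ` {1..T}))"
      have pw: "max (Lf \<xi> + 1) 0 \<le> s i + lam * nrm (\<xi> - \<zeta> i)" if \<xi>: "\<xi> \<in> \<Xi>" and i: "i \<in> {1..N}" for \<xi> i
      proof -
        have nn: "nrm (\<zeta> i - \<xi>) = nrm (\<xi> - \<zeta> i)" using np(2)[of "\<xi> - \<zeta> i"] by simp
        have h: "- \<alpha> t * f t x \<xi> + 1 \<le> s i + lam * nrm (\<xi> - \<zeta> i)" if t: "t \<in> {1..T}" for t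
        proof -
          have "z i t \<bullet> (\<zeta> i - \<xi>) \<le> dual_norm nrm (z i t) * nrm (\<zeta> i - \<xi>)" by (rule dual_norm_ineq[OF nrm])
          also have "\<dots> \<le> lam * nrm (\<zeta> i - \<xi>)" using dn i t np(3) by (intro mult_right_mono) auto
          finally have "z i t \<bullet> (\<zeta> i - \<xi>) \<le> lam * nrm (\<xi> - \<zeta> i)" using nn by simp
          moreover have "z i t \<bullet> \<xi> - \<alpha> t * f t x \<xi> + (1 - z i t \<bullet> \<zeta> i - s i) \<le> 0" by (rule Gpt[OF i t \<xi>])
          ultimately show ?thesis by (simp add: inner_diff_right)
        qed
        have b: "- \<alpha> t * f t x \<xi> \<le> s i + lam * nrm (\<xi> - \<zeta> i) - 1" if t: "t \<in> {1..T}" for t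
          using h[OF t] by linarith
        have "Lf \<xi> \<le> s i + lam * nrm (\<xi> - \<zeta> i) - 1" unfolding Lf_def using Tne b
          by (subst Max_le_iff) auto
        moreover have "0 \<le> s i + lam * nrm (\<xi> - \<zeta> i)" using s0 i lam np(3) by simp
        ultimately show ?thesis by simp
      qed
      have gm: "(\<lambda>\<xi>. max (Lf \<xi> + 1) 0) \<in> borel_measurable borel" using Lm[of \<alpha> x] unfolding Lf_def by measurable
      have "(SUP P\<in>?PW. INF \<beta>::real. ereal \<beta> + ereal (1 / \<epsilon>) *
        enn2ereal (\<integral>\<^sup>+ \<xi>. ennreal (max (Max ((\<lambda>t. - \<alpha> t * f t x \<xi>) ` {1..T}) - \<beta>) 0) \<partial>P)) \<le> 0"
      proof (rule SUP_least)
        fix P assume P: "P \<in> ?PW"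
        have I: "(\<integral>\<^sup>+ \<xi>. ennreal (max (Lf \<xi> + 1) 0) \<partial>P) \<le> ennreal \<epsilon>"
          by (rule weak_bound[OF nrm N A2(2) gm lam delta eps(1) _ pw bud P]) (use s0 in auto)
        have "enn2ereal (\<integral>\<^sup>+ \<xi>. ennreal (max (Lf \<xi> + 1) 0) \<partial>P) \<le> ereal \<epsilon>"
          using I eps by (metis enn2ereal_ennreal less_imp_le less_eq_ennreal.rep_eq)
        then have "ereal (1 / \<epsilon>) * enn2ereal (\<integral>\<^sup>+ \<xi>. ennreal (max (Lf \<xi> + 1) 0) \<partial>P) \<le> ereal (1 / \<epsilon>) * ereal \<epsilon>"
          using eps by (intro ereal_mult_left_mono) simp_all
        then have "ereal (- 1) + ereal (1 / \<epsilon>) * enn2ereal (\<integral>\<^sup>+ \<xi>. ennreal (max (Lf \<xi> + 1) 0) \<partial>P) \<le> ereal (- 1) + ereal (1 / \<epsilon>) * ereal \<epsilon>"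
          by (rule add_left_mono)
        also have "\<dots> = 0" using eps by simp
        finally have fin: "ereal (- 1) + ereal (1 / \<epsilon>) * enn2ereal (\<integral>\<^sup>+ \<xi>. ennreal (max (Lf \<xi> - (- 1)) 0) \<partial>P) \<le> 0"
          by simp
        show "(INF \<beta>::real. ereal \<beta> + ereal (1 / \<epsilon>) *
          enn2ereal (\<integral>\<^sup>+ \<xi>. ennreal (max (Max ((\<lambda>t. - \<alpha> t * f t x \<xi>) ` {1..T}) - \<beta>) 0) \<partial>P)) \<le> 0"
          by (rule INF_lower2[of "- 1"]) (use fin in \<open>simp_all add: Lf_def\<close>)
      qed
      then show ?thesis using apos by (intro iffD2[OF ZCmem] exI[of _ \<alpha>] conjI)
    qed
  qed
qed

end
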